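(* Let $K\in BC^1(\mathbf{R}^2)$ be real-valued and satisfy: there is $k_m>0$ with $K(x)\ge k_m$ for all $x$; $x\cdot\nabla K(x)\le0$ for all $x$; and there are $r_0>0$, $k_0\ge k_m$ with $K(x)=k_0$ for $|x|>r_0$. There is a constant $C_{r_0}>0$ (independent of $t$ and of the data) such that the following holds. Let $u_0,u_1\in C_0^\infty(\mathbf{R}^2)$ be real-valued (with supports in some ball $\{|x|\le L\}$) and $u$ the smooth solution of $$u_{tt}-\nabla\cdot(K(x)\nabla u)=0\ \text{in }(0,\infty)\times\mathbf{R}^2,\quad u(0,\cdot)=u_0,\ u_t(0,\cdot)=u_1.$$ Let $R>r_0$ and $t>R/\sqrt{k_0}$. Then $$\int_{\mathbf{R}^2}|u_t(t,x)\,(x\cdot\nabla u(t,x))|\,dx\le\frac{R}{\sqrt{k_m}}E_{u,R}(t)+\frac{C_{r_0}}{\sqrt{k_m}}\int_{\mathbf{R}^2}(1+|x|)e(0,x)\,dx+t\int_{|x|\ge R}e(t,x)\,dx,$$ where $e(t,x):=\frac12\big(|u_t(t,x)|^2+K(x)|\nabla u(t,x)|^2\big)$ and $E_{u,R}(t):=\int_{|x|\le R}e(t,x)\,dx$.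
   Context: $BC^1(\mathbf{R}^2)$ denotes the bounded continuous functions on $\mathbf{R}^2$ with bounded continuous first partial derivatives. All functions are real-valued. *)

theory Defs
  imports "HOL-Analysis.Analysis"
begin

fun iter_pderiv :: "('a::real_normed_vector \<Rightarrow> real) \<Rightarrow> 'a list \<Rightarrow> 'a \<Rightarrow> real" where
  "iter_pderiv f [] = f"
| "iter_pderiv f (v # vs) = (\<lambda>x. frechet_derivative (iter_pderiv f vs) (at x) v)"

text \<open>C-infinity on the whole space: every iterated partial derivative (along basis
  vectors) exists and is differentiable everywhere (hence all partials are continuous).\<close>
definition smooth :: "('a::euclidean_space \<Rightarrow> real) \<Rightarrow> bool" where
  "smooth f \<longleftrightarrow> (\<forall>vs. set vs \<subseteq> Basis \<longrightarrow> (\<forall>x. iter_pderiv f vs differentiable at x))"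

definition grad :: "(real^2 \<Rightarrow> real) \<Rightarrow> real^2 \<Rightarrow> real^2" where
  "grad f x = (\<chi> i. frechet_derivative f (at x) (axis i 1))"

definition divergence :: "(real^2 \<Rightarrow> real^2) \<Rightarrow> real^2 \<Rightarrow> real" where
  "divergence F x = (\<Sum>i\<in>UNIV. frechet_derivative (\<lambda>y. F y $ i) (at x) (axis i 1))"

definition BC1 :: "(real^2 \<Rightarrow> real) \<Rightarrow> bool" where
  "BC1 K \<longleftrightarrow> bounded (range K) \<and> continuous_on UNIV K \<and> (\<forall>x. K differentiable at x) \<and>
     (\<forall>i. continuous_on UNIV (\<lambda>x. frechet_derivative K (at x) (axis i 1)) \<and>
          bounded (range (\<lambda>x. frechet_derivative K (at x) (axis i 1))))"

definition C0_inf :: "(real^2 \<Rightarrow> real) \<Rightarrow> bool" where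
  "C0_inf f \<longleftrightarrow> smooth f \<and> (\<exists>L. \<forall>x. norm x > L \<longrightarrow> f x = 0)"

definition dt :: "(real \<Rightarrow> real^2 \<Rightarrow> real) \<Rightarrow> real \<Rightarrow> real^2 \<Rightarrow> real" where
  "dt u t x = deriv (\<lambda>s. u s x) t"

definition edens :: "(real^2 \<Rightarrow> real) \<Rightarrow> (real \<Rightarrow> real^2 \<Rightarrow> real) \<Rightarrow> real \<Rightarrow> real^2 \<Rightarrow> real" where
  "edens K u t x = (1/2) * ((dt u t x)\<^sup>2 + K x * (norm (grad (u t) x))\<^sup>2)"

end

theory Submission
  imports Defs
begin


lemma line_deriv:
  fixes f :: "'a::real_normed_vector \<Rightarrow> real"
  assumes "f differentiable at (p + s *\<^sub>R v)"
  shows "((\<lambda>s. f (p + s *\<^sub>R v)) has_real_derivative frechet_derivative f (at (p + s *\<^sub>R v)) v) (at s within S)"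
proof -
  have d: "(f has_derivative frechet_derivative f (at (p + s *\<^sub>R v))) (at (p + s *\<^sub>R v))"
    using assms frechet_derivative_works by blast
  have l: "linear (frechet_derivative f (at (p + s *\<^sub>R v)))"
    using d has_derivative_linear by blast
  have "((\<lambda>s. p + s *\<^sub>R v) has_derivative (\<lambda>h. h *\<^sub>R v)) (at s within S)"
    by (auto intro!: derivative_eq_intros)
  from has_derivative_compose[OF this d[THEN has_derivative_at_withinI]]
  have "((\<lambda>s. f (p + s *\<^sub>R v)) has_derivative (\<lambda>h. frechet_derivative f (at (p + s *\<^sub>R v)) (h *\<^sub>R v))) (at s within S)"
    by (simp add: o_def)
  moreover have "(\<lambda>h. frechet_derivative f (at (p + s *\<^sub>R v)) (h *\<^sub>R v)) = (*) (frechet_derivative f (at (p + s *\<^sub>R v)) v)"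
    using linear_scale[OF l] by (auto simp: mult.commute)
  ultimately show ?thesis unfolding has_field_derivative_def by simp
qed


lemma clairaut:
  fixes f :: "'a::euclidean_space \<Rightarrow> real"
  assumes df: "\<And>p. f differentiable at p"
    and dv: "\<And>p. (\<lambda>p. frechet_derivative f (at p) v) differentiable at p"
    and dw: "\<And>p. (\<lambda>p. frechet_derivative f (at p) w) differentiable at p"
    and cvw: "continuous_on UNIV (\<lambda>p. frechet_derivative (\<lambda>p. frechet_derivative f (at p) v) (at p) w)"
  shows "frechet_derivative (\<lambda>p. frechet_derivative f (at p) w) (at p) v
       = frechet_derivative (\<lambda>p. frechet_derivative f (at p) v) (at p) w"
proof -
  define fv where "fv = (\<lambda>p. frechet_derivative f (at p) v)"
  define fw where "fw = (\<lambda>p. frechet_derivative f (at p) w)"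
  define fvw where "fvw = (\<lambda>p. frechet_derivative fv (at p) w)"
  have cfvw: "continuous_on UNIV fvw" using cvw by (simp add: fvw_def fv_def)
  have E: "fw (p + s *\<^sub>R v) - fw (p - v) = integral {-1..s} (\<lambda>\<sigma>. fvw (p + \<sigma> *\<^sub>R v))"
    if s: "s \<ge> -1" for s
  proof -
    define I where "I = (\<lambda>y. integral {-1..s} (\<lambda>\<sigma>. fv ((p + \<sigma> *\<^sub>R v) + y *\<^sub>R w)))"
    have I_eq: "I y = f ((p + y *\<^sub>R w) + s *\<^sub>R v) - f ((p + y *\<^sub>R w) + (-1) *\<^sub>R v)" for y
    proof -
      have "((\<lambda>\<sigma>. fv ((p + y *\<^sub>R w) + \<sigma> *\<^sub>R v)) has_integral
              (f ((p + y *\<^sub>R w) + s *\<^sub>R v) - f ((p + y *\<^sub>R w) + (-1) *\<^sub>R v))) {-1..s}"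
        apply (rule fundamental_theorem_of_calculus[OF s])
        unfolding has_real_derivative_iff_has_vector_derivative[symmetric] fv_def
        by (rule line_deriv[OF df])
      then show ?thesis unfolding I_def by (simp add: integral_unique algebra_simps)
    qed
    have "(I has_field_derivative integral (cbox (-1) s) (\<lambda>\<sigma>. fvw ((p + \<sigma> *\<^sub>R v) + 0 *\<^sub>R w))) (at 0 within UNIV)"
      unfolding I_def cbox_interval[symmetric]
    proof (rule leibniz_rule_field_derivative[where fx="\<lambda>y \<sigma>. fvw ((p + \<sigma> *\<^sub>R v) + y *\<^sub>R w)"])
      show "((\<lambda>y. fv (p + \<sigma> *\<^sub>R v + y *\<^sub>R w)) has_field_derivative fvw (p + \<sigma> *\<^sub>R v + y *\<^sub>R w)) (at y within UNIV)" for y \<sigma>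
        unfolding fvw_def by (rule line_deriv) (simp add: dv[unfolded fv_def[symmetric]])
      show "(\<lambda>\<sigma>. fv (p + \<sigma> *\<^sub>R v + y *\<^sub>R w)) integrable_on cbox (- 1) s" for y
        apply (rule integrable_continuous)
        apply (rule continuous_on_compose2[of UNIV fv])
        using dv[unfolded fv_def[symmetric]] 
        by (auto intro!: continuous_intros differentiable_imp_continuous_on simp: differentiable_on_def)
      show "continuous_on (UNIV \<times> cbox (- 1) s) (\<lambda>(y, \<sigma>). fvw (p + \<sigma> *\<^sub>R v + y *\<^sub>R w))"
      proof -
        have "continuous_on (UNIV \<times> cbox (- 1) s) (\<lambda>z. fvw (p + snd z *\<^sub>R v + fst z *\<^sub>R w))"
          by (rule continuous_on_compose2[OF cfvw]) (auto intro!: continuous_intros)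
        then show ?thesis by (simp add: split_beta)
      qed
    qed auto
    moreover have "(I has_field_derivative fw (p + s *\<^sub>R v) - fw (p + (-1) *\<^sub>R v)) (at 0 within UNIV)"
    proof -
      have "((\<lambda>y. f ((p + s *\<^sub>R v) + y *\<^sub>R w) - f ((p + (-1) *\<^sub>R v) + y *\<^sub>R w)) has_field_derivative
          fw ((p + s *\<^sub>R v) + 0 *\<^sub>R w) - fw ((p + (-1) *\<^sub>R v) + 0 *\<^sub>R w)) (at 0 within UNIV)"
        unfolding fw_def by (intro DERIV_diff line_deriv df)
      moreover have "(\<lambda>y. f ((p + s *\<^sub>R v) + y *\<^sub>R w) - f ((p + (-1) *\<^sub>R v) + y *\<^sub>R w)) = I"
        by (rule ext) (simp add: I_eq algebra_simps)
      ultimately show ?thesis by simp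
    qed
    ultimately have "integral (cbox (-1) s) (\<lambda>\<sigma>. fvw ((p + \<sigma> *\<^sub>R v) + 0 *\<^sub>R w)) = fw (p + s *\<^sub>R v) - fw (p + (-1) *\<^sub>R v)"
      using DERIV_unique by auto
    then show ?thesis by (simp add: cbox_interval)
  qed
  have D1: "((\<lambda>s. fw (p + s *\<^sub>R v) - fw (p - v)) has_field_derivative frechet_derivative fw (at p) v) (at 0)"
    using line_deriv[of fw p 0 v UNIV] dw[unfolded fw_def[symmetric]] by (auto intro!: derivative_eq_intros)
  have "((\<lambda>s. integral {-1..s} (\<lambda>\<sigma>. fvw (p + \<sigma> *\<^sub>R v))) has_field_derivative fvw (p + 0 *\<^sub>R v)) (at 0 within {-1..1})"
    unfolding has_real_derivative_iff_has_vector_derivative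
    apply (rule integral_has_vector_derivative)
    apply (rule continuous_on_compose2[OF cfvw])
    by (auto intro!: continuous_intros)
  then have "((\<lambda>s. integral {-1..s} (\<lambda>\<sigma>. fvw (p + \<sigma> *\<^sub>R v))) has_field_derivative fvw p) (at 0 within {-1..1})"
    by simp
  then have "((\<lambda>s. fw (p + s *\<^sub>R v) - fw (p - v)) has_field_derivative fvw p) (at 0 within {-1..1})"
    by (rule has_field_derivative_transform_within[where d=1]) (auto simp: E)
  moreover have "at (0::real) within {-1..1} = at 0"
    by (rule at_within_interior) auto
  ultimately have D2: "((\<lambda>s. fw (p + s *\<^sub>R v) - fw (p - v)) has_field_derivative fvw p) (at 0)" by simp
  from DERIV_unique[OF D1 D2] show ?thesis by (simp add: fvw_def fv_def fw_def)
qed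


lemma integral_partial_zero:
  fixes G :: "'a::euclidean_space \<Rightarrow> real" and B :: real and e :: 'a
  assumes dG: "\<And>x. G differentiable at x"
    and cont: "continuous_on UNIV (\<lambda>x. frechet_derivative G (at x) e)"
    and supp: "\<And>x. norm x \<ge> B \<Longrightarrow> G x = 0"
    and ne: "norm e \<le> 1"
  shows "integral (cbox (-((B+1) *\<^sub>R One)) ((B+1) *\<^sub>R One)) (\<lambda>x. frechet_derivative G (at x) e) = 0"
proof -
  define a :: 'a where "a = -((B+1) *\<^sub>R One)"
  define b :: 'a where "b = (B+1) *\<^sub>R One"
  have out: "G (x + h *\<^sub>R e) = 0" if "x \<notin> cbox a b" "\<bar>h\<bar> \<le> 1" for x h
  proof -
    from that(1) obtain i where i: "i \<in> Basis" "\<not> (a \<bullet> i \<le> x \<bullet> i \<and> x \<bullet> i \<le> b \<bullet> i)"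
      by (auto simp: mem_box)
    then have "\<bar>x \<bullet> i\<bar> > B + 1" by (auto simp: a_def b_def inner_simps)
    moreover have "\<bar>x \<bullet> i\<bar> \<le> norm x" using i(1) Basis_le_norm by blast
    moreover have "norm (h *\<^sub>R e) \<le> 1" using ne that(2) by (simp add: mult_le_one)
    moreover have "norm x \<le> norm (x + h *\<^sub>R e) + norm (h *\<^sub>R e)"
      by (metis add_diff_cancel norm_triangle_ineq4)
    ultimately have "norm (x + h *\<^sub>R e) \<ge> B" by linarith
    then show ?thesis by (rule supp)
  qed
  have contG: "continuous_on UNIV G"
    using dG by (auto intro!: differentiable_imp_continuous_on simp: differentiable_on_def)
  have GI: "(G has_integral integral (cbox a b) G) (cbox a b)"
    using contG by (auto intro!: integrable_continuous continuous_on_subset)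
  have Phi: "((\<lambda>x. G (x + h *\<^sub>R e)) has_integral integral (cbox a b) G) (cbox a b)" if h: "\<bar>h\<bar> \<le> 1" for h
  proof -
    have "((\<lambda>x. G (1 *\<^sub>R x + h *\<^sub>R e)) has_integral (integral (cbox a b) G /\<^sub>R 1 ^ DIM('a)))
           (cbox ((a - h *\<^sub>R e) /\<^sub>R 1) ((b - h *\<^sub>R e) /\<^sub>R 1))"
      by (rule has_integral_affinity'[OF GI]) simp
    then have "((\<lambda>x. G (x + h *\<^sub>R e)) has_integral integral (cbox a b) G) (cbox (a - h *\<^sub>R e) (b - h *\<^sub>R e))"
      by simp
    then have "((\<lambda>x. G (x + h *\<^sub>R e)) has_integral integral (cbox a b) G) UNIV"
    proof (rule has_integral_on_superset)
      show "G (x + h *\<^sub>R e) = 0" if "x \<notin> cbox (a - h *\<^sub>R e) (b - h *\<^sub>R e)" for x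
      proof -
        have "x + h *\<^sub>R e \<notin> cbox a b" using that unfolding mem_box by (auto simp: inner_simps; force simp: algebra_simps)
        then show ?thesis using out[of "x + h *\<^sub>R e" 0] by simp
      qed
    qed auto
    moreover have "(\<lambda>x. if x \<in> cbox a b then G (x + h *\<^sub>R e) else 0) = (\<lambda>x. G (x + h *\<^sub>R e))"
      using out h by auto
    ultimately show ?thesis using has_integral_restrict_UNIV[of "cbox a b" "\<lambda>x. G (x + h *\<^sub>R e)"] by simp
  qed
  define Ph where "Ph = (\<lambda>h. integral (cbox a b) (\<lambda>x. G (x + h *\<^sub>R e)))"
  have D1: "(Ph has_field_derivative integral (cbox a b) (\<lambda>x. frechet_derivative G (at (x + 0 *\<^sub>R e)) e)) (at 0 within {-1..1})"
    unfolding Ph_def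
  proof (rule leibniz_rule_field_derivative[where fx="\<lambda>h x. frechet_derivative G (at (x + h *\<^sub>R e)) e"])
    show "((\<lambda>h. G (x + h *\<^sub>R e)) has_field_derivative frechet_derivative G (at (x + h *\<^sub>R e)) e) (at h within {-1..1})" for h x
      by (rule line_deriv[OF dG])
    show "(\<lambda>x. G (x + h *\<^sub>R e)) integrable_on cbox a b" for h
      apply (rule integrable_continuous)
      apply (rule continuous_on_compose2[OF contG])
      by (auto intro!: continuous_intros)
    have "continuous_on ({-1..1} \<times> cbox a b) (\<lambda>z. frechet_derivative G (at (snd z + fst z *\<^sub>R e)) e)"
      by (rule continuous_on_compose2[OF cont, where f="\<lambda>z. snd z + fst z *\<^sub>R e"]) (auto intro!: continuous_intros)
    then show "continuous_on ({-1..1} \<times> cbox a b) (\<lambda>(h, x). frechet_derivative G (at (x + h *\<^sub>R e)) e)"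
      by (simp add: split_beta)
  qed auto
  have "((\<lambda>h. integral (cbox a b) G) has_field_derivative 0) (at 0 within {-1..1})"
    by simp
  then have D2: "(Ph has_field_derivative 0) (at 0 within {-1..1})"
    by (rule has_field_derivative_transform_within[where d=1]) (auto simp: Ph_def integral_unique[OF Phi])
  have "at (0::real) within {-1..1} = at 0"
    by (rule at_within_interior) auto
  with D1 D2 have "integral (cbox a b) (\<lambda>x. frechet_derivative G (at (x + 0 *\<^sub>R e)) e) = 0"
    using DERIV_unique by metis
  then show ?thesis by (simp add: a_def b_def)
qed


definition Dd :: "'a::real_normed_vector \<Rightarrow> ('a \<Rightarrow> real) \<Rightarrow> 'a \<Rightarrow> real" where
  "Dd v g p = frechet_derivative g (at p) v"

lemma Dd_has:
  assumes "g differentiable at p"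
  shows "(g has_derivative (\<lambda>h. Dd h g p)) (at p within S)"
  using assms frechet_derivative_works has_derivative_at_withinI unfolding Dd_def
  by (metis (no_types, lifting) ext)

lemma Dd_eq:
  assumes "(g has_derivative g') (at p)"
  shows "Dd h g p = g' h"
  using frechet_derivative_at[OF assms] by (simp add: Dd_def)

lemma deriv_t:
  fixes F :: "real \<times> 'b::real_normed_vector \<Rightarrow> real"
  assumes "F differentiable at (\<tau>, x)"
  shows "((\<lambda>\<tau>. F (\<tau>, x)) has_real_derivative Dd (1,0) F (\<tau>, x)) (at \<tau> within S)"
  using line_deriv[of F "(0,x)" \<tau> "(1,0)" S] assms by (simp add: Dd_def)

lemma deriv_x:
  fixes F :: "real \<times> 'b::real_normed_vector \<Rightarrow> real"
  assumes "F differentiable at (\<tau>, x)"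
  shows "((\<lambda>y. F (\<tau>, y)) has_derivative (\<lambda>h. Dd (0,h) F (\<tau>, x))) (at x within S)"
proof -
  have "((\<lambda>y. (\<tau>, y)) has_derivative (\<lambda>h. (0, h))) (at x within S)"
    by (auto intro!: derivative_eq_intros)
  from has_derivative_compose[OF this Dd_has[OF assms]] show ?thesis by (simp add: o_def)
qed

definition rho :: "real^2 \<Rightarrow> real" where "rho x = sqrt (1 + x \<bullet> x)"

lemma rho_ge: "rho x \<ge> 1" "rho x \<ge> norm x" "rho x \<le> norm x + 1" "rho x > 0"
proof -
  have xx: "x \<bullet> x = (norm x)\<^sup>2" by (simp add: power2_norm_eq_inner)
  show "rho x \<ge> 1" unfolding rho_def by simp
  show "rho x \<ge> norm x" unfolding rho_def xx by (simp add: real_le_rsqrt)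
  show "rho x \<le> norm x + 1" unfolding rho_def xx
    by (rule real_sqrt_le_iff[THEN iffD2, of _ "(norm x + 1)\<^sup>2", simplified]) (simp add: power2_eq_square algebra_simps)
  then show "rho x > 0" using \<open>rho x \<ge> 1\<close> by linarith
qed

lemma rho_has: "(rho has_derivative (\<lambda>h. (x \<bullet> h) / rho x)) (at x within S)"
proof -
  have "1 + x \<bullet> x > 0" by (simp add: add_pos_nonneg)
  then show ?thesis unfolding rho_def
    by (auto intro!: derivative_eq_intros simp: inner_commute field_simps)
qed

lemma cont_rho: "continuous_on S rho"
  unfolding rho_def by (auto intro!: continuous_intros)


abbreviation eT :: "real \<times> (real^2)" where "eT \<equiv> (1,0)"
abbreviation eX :: "2 \<Rightarrow> real \<times> (real^2)" where "eX i \<equiv> (0, axis i 1)"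

lemma basis_eT: "eT \<in> Basis" by (simp add: Basis_prod_def)
lemma basis_eX: "eX i \<in> Basis" by (auto simp add: Basis_prod_def Basis_vec_def)

lemma norm_sq_vec2: "(norm (x::real^2))\<^sup>2 = (\<Sum>i\<in>UNIV. (x $ i)\<^sup>2)"
  unfolding power2_norm_eq_inner inner_vec_def by (simp add: power2_eq_square)

locale wave =
  fixes U :: "real \<times> (real^2) \<Rightarrow> real" and K :: "real^2 \<Rightarrow> real"
  assumes dU: "\<And>p. U differentiable at p"
    and dU1: "\<And>v p. v \<in> Basis \<Longrightarrow> Dd v U differentiable at p"
    and dU2: "\<And>v w p. v \<in> Basis \<Longrightarrow> w \<in> Basis \<Longrightarrow> Dd w (Dd v U) differentiable at p"
    and dK: "\<And>x. K differentiable at x"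
    and cK: "\<And>i. continuous_on UNIV (Dd (axis i 1) K)"
    and Kpos: "\<And>x. K x > 0"
    and pde: "\<And>\<tau> x. \<tau> \<ge> 0 \<Longrightarrow> Dd eT (Dd eT U) (\<tau>, x) =
        (\<Sum>i\<in>UNIV. Dd (axis i 1) K x * Dd (eX i) U (\<tau>, x) + K x * Dd (eX i) (Dd (eX i) U) (\<tau>, x))"
begin

lemma cont0: "continuous_on S U"
  by (meson dU differentiable_at_withinI differentiable_imp_continuous_on differentiable_on_def)
lemma cont1: "v \<in> Basis \<Longrightarrow> continuous_on S (Dd v U)"
  by (meson dU1 differentiable_at_withinI differentiable_imp_continuous_on differentiable_on_def)
lemma cont2: "v \<in> Basis \<Longrightarrow> w \<in> Basis \<Longrightarrow> continuous_on S (Dd w (Dd v U))"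
  by (meson dU2 differentiable_at_withinI differentiable_imp_continuous_on differentiable_on_def)
lemma contK: "continuous_on S K"
  by (meson dK differentiable_at_withinI differentiable_imp_continuous_on differentiable_on_def)
lemma contKd: "continuous_on S (Dd (axis i 1) K)"
  using cK continuous_on_subset by blast

lemma sym2: "v \<in> Basis \<Longrightarrow> w \<in> Basis \<Longrightarrow> Dd w (Dd v U) p = Dd v (Dd w U) p"
proof -
  assume v: "v \<in> Basis" and w: "w \<in> Basis"
  have e: "\<And>z. Dd z U = (\<lambda>p. frechet_derivative U (at p) z)" by (auto simp: Dd_def)
  show ?thesis
    using clairaut[of U v w p] dU dU1[OF v] dU1[OF w] cont2[OF v w, of UNIV]
    by (simp add: e Dd_def[abs_def])
qed

end


lemma comp_real:
  assumes "(f has_derivative f') (at y0 within S)" "(ps has_real_derivative d) (at (f y0))"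
  shows "((\<lambda>y. ps (f y)) has_derivative (\<lambda>h. d * f' h)) (at y0 within S)"
proof -
  have "(ps has_derivative (*) d) (at (f y0))" using assms(2) by (simp add: has_field_derivative_def)
  from has_derivative_compose[OF assms(1) has_derivative_at_withinI[OF this]]
  show ?thesis by (simp add: o_def)
qed

locale wave_weight = wave +
  fixes ps psd ch chd :: "real \<Rightarrow> real" and c Ms :: real
  assumes psi_d: "\<And>s. (ps has_real_derivative psd s) (at s)"
    and chi_d: "\<And>s. (ch has_real_derivative chd s) (at s)"
    and psi_c: "continuous_on UNIV psd" and chi_c: "continuous_on UNIV chd"
    and psi_nn: "\<And>s. ps s \<ge> 0" and psi'_nn: "\<And>s. psd s \<ge> 0"
    and chi_nn: "\<And>s. ch s \<ge> 0" and chi'_np: "\<And>s. chd s \<le> 0"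
    and chi_supp: "\<And>s. s \<ge> Ms \<Longrightarrow> ch s = 0 \<and> chd s = 0"
    and c_pos: "c > 0"
begin

definition "Phi \<tau> x = ps (rho x - c * \<tau>) * ch (rho x + c * \<tau>)"
definition "Aw \<tau> x = psd (rho x - c * \<tau>) * ch (rho x + c * \<tau>) + ps (rho x - c * \<tau>) * chd (rho x + c * \<tau>)"
definition "Phit \<tau> x = - c * psd (rho x - c * \<tau>) * ch (rho x + c * \<tau>) + c * ps (rho x - c * \<tau>) * chd (rho x + c * \<tau>)"
definition "ut \<tau> x = Dd eT U (\<tau>, x)"
definition "g i \<tau> x = Dd (eX i) U (\<tau>, x)"
definition "En \<tau> x = 1/2 * ((ut \<tau> x)\<^sup>2 + K x * (\<Sum>i\<in>UNIV. (g i \<tau> x)\<^sup>2))"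
definition "Et \<tau> x = ut \<tau> x * Dd eT (Dd eT U) (\<tau>, x) + K x * (\<Sum>i\<in>UNIV. g i \<tau> x * Dd eT (Dd (eX i) U) (\<tau>, x))"
definition "P \<tau> x = Phi \<tau> x * En \<tau> x"
definition "Pt \<tau> x = Phit \<tau> x * En \<tau> x + Phi \<tau> x * Et \<tau> x"
definition "G i \<tau> x = Phi \<tau> x * ut \<tau> x * K x * g i \<tau> x"
definition "Gd i \<tau> x = Aw \<tau> x * (x $ i) / rho x * ut \<tau> x * K x * g i \<tau> x
   + Phi \<tau> x * Dd (eX i) (Dd eT U) (\<tau>, x) * K x * g i \<tau> x
   + Phi \<tau> x * ut \<tau> x * Dd (axis i 1) K x * g i \<tau> x
   + Phi \<tau> x * ut \<tau> x * K x * Dd (eX i) (Dd (eX i) U) (\<tau>, x)"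

lemma P_t: "((\<lambda>\<tau>. P \<tau> x) has_real_derivative Pt \<tau> x) (at \<tau> within S)"
proof -
  have d1: "((\<lambda>\<tau>. ut \<tau> x) has_real_derivative Dd eT (Dd eT U) (\<tau>, x)) (at \<tau> within S)"
    unfolding ut_def by (rule deriv_t[OF dU1[OF basis_eT]])
  have d2: "((\<lambda>\<tau>. g i \<tau> x) has_real_derivative Dd eT (Dd (eX i) U) (\<tau>, x)) (at \<tau> within S)" for i
    unfolding g_def by (rule deriv_t[OF dU1[OF basis_eX]])
  have dpsi: "((\<lambda>\<tau>. ps (rho x - c * \<tau>)) has_real_derivative psd (rho x - c * \<tau>) * (- c)) (at \<tau> within S)"
    by (rule DERIV_chain2[OF psi_d]) (auto intro!: derivative_eq_intros)
  have dchi: "((\<lambda>\<tau>. ch (rho x + c * \<tau>)) has_real_derivative chd (rho x + c * \<tau>) * c) (at \<tau> within S)"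
    by (rule DERIV_chain2[OF chi_d]) (auto intro!: derivative_eq_intros)
  have dEn: "((\<lambda>\<tau>. En \<tau> x) has_real_derivative Et \<tau> x) (at \<tau> within S)"
    unfolding En_def Et_def
    by (auto intro!: derivative_eq_intros d1 d2 simp: sum_distrib_left algebra_simps)
  show ?thesis unfolding P_def Pt_def Phi_def
    apply (rule DERIV_cong[OF DERIV_mult[OF DERIV_mult[OF dpsi dchi] dEn]])
    by (simp add: Phit_def algebra_simps)
qed

lemma Phi_x: "((\<lambda>y. Phi \<tau> y) has_derivative (\<lambda>h. Aw \<tau> x * ((x \<bullet> h) / rho x))) (at x)"
proof -
  have r1: "((\<lambda>y. rho y - c * \<tau>) has_derivative (\<lambda>h. (x \<bullet> h) / rho x)) (at x)"
    using has_derivative_diff[OF rho_has has_derivative_const] by simp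
  have r2: "((\<lambda>y. rho y + c * \<tau>) has_derivative (\<lambda>h. (x \<bullet> h) / rho x)) (at x)"
    using has_derivative_add[OF rho_has has_derivative_const] by simp
  show ?thesis unfolding Phi_def
    apply (rule has_derivative_eq_rhs[OF has_derivative_mult[OF comp_real[OF r1 psi_d] comp_real[OF r2 chi_d]]])
    by (auto simp: Aw_def algebra_simps)
qed

lemma G_x: "(G i \<tau> has_derivative (\<lambda>h. Phi \<tau> x * ut \<tau> x * K x * Dd (0,h) (Dd (eX i) U) (\<tau>, x)
      + (Phi \<tau> x * ut \<tau> x * Dd h K x + (Phi \<tau> x * Dd (0,h) (Dd eT U) (\<tau>, x)
      + Aw \<tau> x * ((x \<bullet> h) / rho x) * ut \<tau> x) * K x) * g i \<tau> x)) (at x)"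
proof -
  have dut: "((\<lambda>y. ut \<tau> y) has_derivative (\<lambda>h. Dd (0,h) (Dd eT U) (\<tau>, x))) (at x)"
    unfolding ut_def by (rule deriv_x[OF dU1[OF basis_eT]])
  have dg: "((\<lambda>y. g i \<tau> y) has_derivative (\<lambda>h. Dd (0,h) (Dd (eX i) U) (\<tau>, x))) (at x)"
    unfolding g_def by (rule deriv_x[OF dU1[OF basis_eX]])
  have dKx: "(K has_derivative (\<lambda>h. Dd h K x)) (at x)" by (rule Dd_has[OF dK])
  note has_derivative_mult[OF has_derivative_mult[OF has_derivative_mult[OF Phi_x dut] dKx] dg]
  then show ?thesis unfolding G_def[abs_def] by (simp add: algebra_simps)
qed

lemma G_diff: "G i \<tau> differentiable at x"
  using G_x differentiable_def by blast

lemma G_Dd: "Dd (axis i 1) (G i \<tau>) x = Gd i \<tau> x"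
  by (simp add: Dd_eq[OF G_x] Gd_def inner_axis algebra_simps)

lemma cc_ps[continuous_intros]: "continuous_on S f \<Longrightarrow> continuous_on S (\<lambda>z. ps (f z))"
  by (rule continuous_on_compose2[of UNIV ps]) (auto intro: DERIV_isCont[OF psi_d] continuous_at_imp_continuous_on)
lemma cc_ch[continuous_intros]: "continuous_on S f \<Longrightarrow> continuous_on S (\<lambda>z. ch (f z))"
  by (rule continuous_on_compose2[of UNIV ch]) (auto intro: DERIV_isCont[OF chi_d] continuous_at_imp_continuous_on)
lemma cc_psd[continuous_intros]: "continuous_on S f \<Longrightarrow> continuous_on S (\<lambda>z. psd (f z))"
  by (rule continuous_on_compose2[OF psi_c]) auto
lemma cc_chd[continuous_intros]: "continuous_on S f \<Longrightarrow> continuous_on S (\<lambda>z. chd (f z))"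
  by (rule continuous_on_compose2[OF chi_c]) auto
lemma cc_rho[continuous_intros]: "continuous_on S f \<Longrightarrow> continuous_on S (\<lambda>z. rho (f z))"
  by (rule continuous_on_compose2[OF cont_rho]) auto
lemma cc_K[continuous_intros]: "continuous_on S f \<Longrightarrow> continuous_on S (\<lambda>z. K (f z))"
  by (rule continuous_on_compose2[OF contK]) auto
lemma cc_Kd[continuous_intros]: "continuous_on S f \<Longrightarrow> continuous_on S (\<lambda>z. Dd (axis i 1) K (f z))"
  by (rule continuous_on_compose2[OF contKd]) auto
lemma cc_U1[continuous_intros]: "v \<in> Basis \<Longrightarrow> continuous_on S f \<Longrightarrow> continuous_on S (\<lambda>z. Dd v U (f z))"
  by (rule continuous_on_compose2[OF cont1]) auto
lemma cc_U2[continuous_intros]: "v \<in> Basis \<Longrightarrow> w \<in> Basis \<Longrightarrow> continuous_on S f \<Longrightarrow> continuous_on S (\<lambda>z. Dd w (Dd v U) (f z))"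
  by (rule continuous_on_compose2[OF cont2]) auto

lemma rho_nz: "rho x \<noteq> 0" using rho_ge(4)[of x] by simp

lemma cont_Gd: "continuous_on S (Gd i \<tau>)"
  unfolding Gd_def Aw_def Phi_def ut_def g_def
  by (auto intro!: continuous_intros basis_eT basis_eX simp: rho_nz)

lemma cont_P: "continuous_on S (P \<tau>)"
  unfolding P_def En_def Phi_def ut_def g_def
  by (auto intro!: continuous_intros basis_eT basis_eX)

lemma cont_Pt: "continuous_on S (\<lambda>z. Pt (fst z) (snd z))"
  unfolding Pt_def En_def Et_def Phi_def Phit_def ut_def g_def
  by (auto intro!: continuous_intros basis_eT basis_eX)

end


lemma key_ineq:
  fixes ut Kx aw r S ng c Ph En :: real
  assumes Kx: "Kx > 0" and r: "r > 0" and S: "\<bar>S\<bar> \<le> r * ng" and ng: "ng \<ge> 0"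
    and En: "En = 1/2 * (ut\<^sup>2 + Kx * ng\<^sup>2)" and Ph: "Ph \<le> - c * \<bar>aw\<bar>"
    and Kc: "aw \<noteq> 0 \<Longrightarrow> Kx \<le> c\<^sup>2" and c: "c > 0"
  shows "Ph * En \<le> ut * Kx * (aw / r) * S"
proof -
  have En0: "En \<ge> 0" unfolding En using Kx by (auto intro!: add_nonneg_nonneg mult_nonneg_nonneg)
  show ?thesis
  proof (cases "aw = 0")
    case True
    have "Ph \<le> 0" using Ph True by simp
    then show ?thesis using True En0 by (simp add: mult_nonpos_nonneg)
  next
    case False
    have sK: "sqrt Kx \<le> c" using real_sqrt_le_mono[OF Kc[OF False]] c by simp
    have Kq: "sqrt Kx * sqrt Kx = Kx" using Kx by simp
    have amgm: "Kx * \<bar>ut\<bar> * ng \<le> sqrt Kx * En"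
    proof -
      have "0 \<le> (\<bar>ut\<bar> - sqrt Kx * ng)\<^sup>2" by simp
      also have "\<dots> = ut\<^sup>2 + Kx * ng\<^sup>2 - 2 * (\<bar>ut\<bar> * (sqrt Kx * ng))"
        using Kq by (simp add: power2_eq_square algebra_simps)
      finally have h: "2 * (\<bar>ut\<bar> * (sqrt Kx * ng)) \<le> ut\<^sup>2 + Kx * ng\<^sup>2" by linarith
      have "sqrt Kx * (2 * (\<bar>ut\<bar> * (sqrt Kx * ng))) \<le> sqrt Kx * (ut\<^sup>2 + Kx * ng\<^sup>2)"
        by (rule mult_left_mono[OF h]) (use Kx in simp)
      moreover have "sqrt Kx * (2 * (\<bar>ut\<bar> * (sqrt Kx * ng))) = 2 * (Kx * \<bar>ut\<bar> * ng)"
        using Kq by (simp add: algebra_simps)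
      ultimately show ?thesis unfolding En by simp
    qed
    have "\<bar>ut * Kx * (aw / r) * S\<bar> = \<bar>aw\<bar> * (Kx * \<bar>ut\<bar> * (\<bar>S\<bar> / r))"
      using Kx r by (simp add: abs_mult)
    also have "\<dots> \<le> \<bar>aw\<bar> * (Kx * \<bar>ut\<bar> * ng)"
    proof -
      have "\<bar>S\<bar> / r \<le> ng" using S r by (simp add: divide_le_eq mult.commute)
      then show ?thesis using Kx by (intro mult_left_mono) auto
    qed
    also have "\<dots> \<le> \<bar>aw\<bar> * (sqrt Kx * En)"
      using amgm by (intro mult_left_mono) auto
    also have "\<dots> \<le> \<bar>aw\<bar> * (c * En)"
      using sK En0 by (intro mult_left_mono mult_right_mono) auto
    also have "\<dots> \<le> - Ph * En"
    proof -
      have "c * \<bar>aw\<bar> * En \<le> (- Ph) * En" using Ph En0 by (intro mult_right_mono) auto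
      then show ?thesis by (simp add: algebra_simps)
    qed
    finally have fin: "\<bar>ut * Kx * (aw / r) * S\<bar> \<le> - Ph * En" .
    have gen: "\<And>X a b::real. \<bar>X\<bar> \<le> (-a) * b \<Longrightarrow> a * b \<le> X" by (simp add: abs_le_iff)
    show ?thesis by (rule gen[OF fin])
  qed
qed

context wave_weight
begin

lemma sum_Gd:
  assumes "\<tau> \<ge> 0"
  shows "(\<Sum>i\<in>UNIV. Gd i \<tau> x) = ut \<tau> x * K x * (Aw \<tau> x / rho x) * (\<Sum>i\<in>UNIV. x $ i * g i \<tau> x)
     + Phi \<tau> x * K x * (\<Sum>i\<in>UNIV. g i \<tau> x * Dd eT (Dd (eX i) U) (\<tau>, x))
     + Phi \<tau> x * ut \<tau> x * Dd eT (Dd eT U) (\<tau>, x)"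
proof -
  have s: "Dd (eX i) (Dd eT U) (\<tau>, x) = Dd eT (Dd (eX i) U) (\<tau>, x)" for i
    using sym2[OF basis_eT basis_eX] by simp
  show ?thesis
    unfolding Gd_def sum.distrib pde[OF assms] g_def
    by (simp add: s sum_distrib_left sum_distrib_right sum_divide_distrib algebra_simps)
qed

lemma pointwise:
  assumes t: "\<tau> \<ge> 0"
    and Kc: "psd (rho x - c * \<tau>) \<noteq> 0 \<or> chd (rho x + c * \<tau>) \<noteq> 0 \<Longrightarrow> K x \<le> c\<^sup>2"
  shows "Pt \<tau> x \<le> (\<Sum>i\<in>UNIV. Gd i \<tau> x)"
proof -
  define gv :: "real^2" where "gv = (\<chi> i. g i \<tau> x)"
  have S: "(\<Sum>i\<in>UNIV. x $ i * g i \<tau> x) = x \<bullet> gv" by (simp add: gv_def inner_vec_def)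
  have ng: "(\<Sum>i\<in>UNIV. (g i \<tau> x)\<^sup>2) = (norm gv)\<^sup>2" by (simp add: gv_def norm_sq_vec2)
  have "\<bar>x \<bullet> gv\<bar> \<le> norm x * norm gv" by (rule Cauchy_Schwarz_ineq2)
  also have "\<dots> \<le> rho x * norm gv" by (intro mult_right_mono rho_ge) auto
  finally have S': "\<bar>x \<bullet> gv\<bar> \<le> rho x * norm gv" .
  have Ph: "Phit \<tau> x \<le> - c * \<bar>Aw \<tau> x\<bar>"
  proof -
    have a1: "psd (rho x - c * \<tau>) * ch (rho x + c * \<tau>) \<ge> 0" using psi'_nn chi_nn by simp
    have a2: "ps (rho x - c * \<tau>) * chd (rho x + c * \<tau>) \<le> 0" using psi_nn chi'_np by (simp add: mult_nonneg_nonpos)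
    have "\<bar>Aw \<tau> x\<bar> \<le> psd (rho x - c * \<tau>) * ch (rho x + c * \<tau>) - ps (rho x - c * \<tau>) * chd (rho x + c * \<tau>)"
      unfolding Aw_def using a1 a2 by linarith
    then have "c * \<bar>Aw \<tau> x\<bar> \<le> c * (psd (rho x - c * \<tau>) * ch (rho x + c * \<tau>) - ps (rho x - c * \<tau>) * chd (rho x + c * \<tau>))"
      using c_pos by (simp add: mult_left_mono)
    then show ?thesis unfolding Phit_def by (simp add: algebra_simps)
  qed
  have Kc': "Aw \<tau> x \<noteq> 0 \<Longrightarrow> K x \<le> c\<^sup>2"
    using Kc unfolding Aw_def by force
  have "Phit \<tau> x * En \<tau> x \<le> ut \<tau> x * K x * (Aw \<tau> x / rho x) * (x \<bullet> gv)"
    by (rule key_ineq[OF Kpos rho_ge(4) S' norm_ge_zero _ Ph Kc' c_pos]) (simp add: En_def ng)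
  then show ?thesis unfolding sum_Gd[OF t] Pt_def Et_def S
    by (simp add: algebra_simps)
qed

lemma supp_Phi: "\<tau> \<ge> 0 \<Longrightarrow> norm x \<ge> Ms \<Longrightarrow> Phi \<tau> x = 0"
proof -
  assume "\<tau> \<ge> 0" "norm x \<ge> Ms"
  then have "rho x + c * \<tau> \<ge> Ms" using rho_ge(2)[of x] c_pos by (smt (verit) mult_nonneg_nonneg)
  then show "Phi \<tau> x = 0" using chi_supp by (simp add: Phi_def)
qed

end


context wave_weight
begin

lemma cont_Pt_slice: "continuous_on S (Pt \<tau>)"
proof -
  have "continuous_on S (\<lambda>x. (\<lambda>z. Pt (fst z) (snd z)) (\<tau>, x))"
    by (rule continuous_on_compose2[OF cont_Pt[of UNIV]]) (auto intro!: continuous_intros)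
  then show ?thesis by simp
qed

lemma box_decay:
  assumes T: "0 \<le> T0" "T0 \<le> T1"
    and Kc: "\<And>\<tau> x. \<tau> \<in> {T0..T1} \<Longrightarrow> psd (rho x - c * \<tau>) \<noteq> 0 \<or> chd (rho x + c * \<tau>) \<noteq> 0 \<Longrightarrow> K x \<le> c\<^sup>2"
  shows "integral (cbox (-((Ms+1) *\<^sub>R One)) ((Ms+1) *\<^sub>R One)) (P T1)
       \<le> integral (cbox (-((Ms+1) *\<^sub>R One)) ((Ms+1) *\<^sub>R One)) (P T0)"
proof -
  define bx :: "(real^2) set" where "bx = cbox (-((Ms+1) *\<^sub>R One)) ((Ms+1) *\<^sub>R One)"
  define F where "F = (\<lambda>\<tau>. integral bx (P \<tau>))"
  have deriv: "(F has_field_derivative integral bx (Pt \<tau>)) (at \<tau> within {T0..T1})"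
    if "\<tau> \<in> {T0..T1}" for \<tau>
    unfolding F_def bx_def
  proof (rule leibniz_rule_field_derivative[where fx="\<lambda>\<tau> x. Pt \<tau> x"])
    show "((\<lambda>\<tau>. P \<tau> x) has_field_derivative Pt \<tau> x) (at \<tau> within {T0..T1})" for \<tau> x
      by (rule P_t)
    show "P \<tau> integrable_on cbox (-((Ms+1) *\<^sub>R One)) ((Ms+1) *\<^sub>R One)" for \<tau>
      by (rule integrable_continuous[OF cont_P])
    show "continuous_on ({T0..T1} \<times> cbox (-((Ms+1) *\<^sub>R One)) ((Ms+1) *\<^sub>R One)) (\<lambda>(\<tau>, x). Pt \<tau> x)"
      using cont_Pt by (simp add: split_beta)
  qed (use that in auto)
  have neg: "integral bx (Pt \<tau>) \<le> 0" if t: "\<tau> \<in> {T0..T1}" for \<tau>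
  proof -
    have t0: "\<tau> \<ge> 0" using t T by auto
    have "integral bx (Pt \<tau>) \<le> integral bx (\<lambda>x. \<Sum>i\<in>UNIV. Gd i \<tau> x)"
    proof (rule integral_le)
      show "Pt \<tau> integrable_on bx" unfolding bx_def
        by (rule integrable_continuous[OF cont_Pt_slice])
      show "(\<lambda>x. \<Sum>i\<in>UNIV. Gd i \<tau> x) integrable_on bx" unfolding bx_def
        by (rule integrable_continuous) (auto intro!: continuous_intros cont_Gd)
      show "Pt \<tau> x \<le> (\<Sum>i\<in>UNIV. Gd i \<tau> x)" for x
        by (rule pointwise[OF t0 Kc[OF t]])
    qed
    also have "\<dots> = (\<Sum>i\<in>UNIV. integral bx (Gd i \<tau>))"
      by (rule Henstock_Kurzweil_Integration.integral_sum) (auto simp: bx_def intro!: integrable_continuous cont_Gd)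
    also have "\<dots> = 0"
    proof (rule sum.neutral, rule ballI)
      fix i :: 2
      have e: "(\<lambda>x. frechet_derivative (G i \<tau>) (at x) (axis i 1)) = Gd i \<tau>"
        using G_Dd by (auto simp: Dd_def)
      have "integral bx (\<lambda>x. frechet_derivative (G i \<tau>) (at x) (axis i 1)) = 0"
        unfolding bx_def
      proof (rule integral_partial_zero)
        show "G i \<tau> differentiable at x" for x by (rule G_diff)
        show "continuous_on UNIV (\<lambda>x. frechet_derivative (G i \<tau>) (at x) (axis i 1))"
          unfolding e by (rule cont_Gd)
        show "G i \<tau> x = 0" if "Ms \<le> norm x" for x
          using supp_Phi[OF t0 that] by (simp add: G_def)
      qed simp
      then show "integral bx (Gd i \<tau>) = 0" unfolding e .
    qed
    finally show ?thesis .
  qed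
  have "((\<lambda>\<tau>. integral bx (Pt \<tau>)) has_integral (F T1 - F T0)) {T0..T1}"
    by (rule fundamental_theorem_of_calculus[OF T(2)])
       (use deriv in \<open>simp add: has_real_derivative_iff_has_vector_derivative[symmetric]\<close>)
  then have "((\<lambda>\<tau>. - integral bx (Pt \<tau>)) has_integral - (F T1 - F T0)) {T0..T1}"
    by (rule has_integral_neg)
  then have "0 \<le> - (F T1 - F T0)"
    by (rule has_integral_nonneg) (use neg in auto)
  then show ?thesis unfolding F_def bx_def by simp
qed

end


definition pp :: "real \<Rightarrow> real" where "pp s = (max 0 s)\<^sup>2"

lemma pp_deriv: "(pp has_real_derivative 2 * max 0 x) (at x)"
proof -
  consider "x > 0" | "x < 0" | "x = 0" by linarith
  then show ?thesis
  proof cases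
    case 1
    have "((\<lambda>s. s\<^sup>2) has_real_derivative 2 * max 0 x) (at x)" using 1 by (auto intro!: derivative_eq_intros)
    then show ?thesis
      by (rule has_field_derivative_transform_within_open[where S="{0<..}"]) (use 1 in \<open>auto simp: pp_def\<close>)
  next
    case 2
    have "((\<lambda>s. 0) has_real_derivative 2 * max 0 x) (at x)" using 2 by simp
    then show ?thesis
      by (rule has_field_derivative_transform_within_open[where S="{..<0}"]) (use 2 in \<open>auto simp: pp_def\<close>)
  next
    case 3
    have l: "((\<lambda>h. (pp (0 + h) - pp 0) / h) \<longlongrightarrow> 0) (at_left 0)"
    proof -
      have ev: "\<forall>\<^sub>F h in at_left (0::real). h \<in> {-1<..<0}" by (rule eventually_at_left_real) simp
      have "\<forall>\<^sub>F h in at_left 0. 0 = (pp (0 + h) - pp 0) / (h::real)"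
        using ev by eventually_elim (auto simp: pp_def)
      then show ?thesis by (rule Lim_transform_eventually[OF tendsto_const])
    qed
    have r: "((\<lambda>h. (pp (0 + h) - pp 0) / h) \<longlongrightarrow> 0) (at_right 0)"
    proof -
      have "\<forall>\<^sub>F h in at_right 0. h = (pp (0 + h) - pp 0) / (h::real)"
        using eventually_at_right_less[of "0::real"] by eventually_elim (auto simp: pp_def power2_eq_square)
      then show ?thesis by (rule Lim_transform_eventually[OF tendsto_ident_at])
    qed
    have "(pp has_real_derivative 0) (at 0)"
      unfolding DERIV_def using l r filterlim_at_split by blast
    then show ?thesis using 3 by simp
  qed
qed


lemma pp_deriv_sh: "((\<lambda>s. pp (s - a)) has_real_derivative 2 * max 0 (x - a)) (at x)"
proof -
  have "((\<lambda>s. s - a) has_real_derivative 1) (at x)" by (auto intro!: derivative_eq_intros)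
  from DERIV_chain2[OF pp_deriv this] show ?thesis by simp
qed

definition q :: "real \<Rightarrow> real" where "q y = pp y / 2 - pp (y - 1) / 2"
definition qd :: "real \<Rightarrow> real" where "qd y = max 0 y - max 0 (y - 1)"

lemma q_deriv: "(q has_real_derivative qd x) (at x)"
proof -
  have "((\<lambda>y. pp (y - 0) / 2 - pp (y - 1) / 2) has_real_derivative 2 * max 0 (x - 0) / 2 - 2 * max 0 (x - 1) / 2) (at x)"
    by (intro DERIV_diff DERIV_cdivide pp_deriv_sh)
  then show ?thesis by (simp add: q_def[abs_def] qd_def)
qed

lemma qd_cont: "continuous_on S qd" unfolding qd_def by (auto intro!: continuous_intros)
lemma qd_nn: "qd y \<ge> 0" unfolding qd_def by simp
lemma qd_zero: "y \<le> 0 \<Longrightarrow> qd y = 0" unfolding qd_def by simp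
lemma q_nn: "q y \<ge> 0"
proof -
  have "max 0 (y - 1) \<le> max 0 y" by simp
  then have "(max 0 (y - 1))\<^sup>2 \<le> (max 0 y)\<^sup>2" by (intro power_mono) auto
  then show ?thesis by (simp add: q_def pp_def)
qed
lemma q_big: "y \<ge> 1 \<Longrightarrow> q y = y - 1/2"
proof -
  assume y: "y \<ge> 1"
  have "q y = (y\<^sup>2 - (y-1)\<^sup>2) / 2" using y by (simp add: q_def pp_def max_def diff_divide_distrib)
  also have "\<dots> = y - 1/2" by (simp add: power2_eq_square field_simps)
  finally show ?thesis .
qed
lemma q_lower: "q y \<ge> y - 1/2"
proof -
  consider "y \<le> 0" | "0 \<le> y" "y \<le> 1" | "y \<ge> 1" by linarith
  then show ?thesis
  proof cases
    case 2
    have "0 \<le> (y - 1)\<^sup>2" by simp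
    then show ?thesis using 2 by (simp add: q_def pp_def max_def power2_eq_square algebra_simps)
  next
    case 3 then show ?thesis by (simp add: q_big)
  qed (auto simp: q_def pp_def max_def power2_eq_square algebra_simps)
qed
lemma q_upper: "q y \<le> max 0 y"
proof -
  consider "y \<le> 0" | "0 \<le> y" "y \<le> 1" | "y \<ge> 1" by linarith
  then show ?thesis
  proof cases
    case 2
    have "y * y \<le> 1 * y" using 2 by (intro mult_right_mono) auto
    then show ?thesis using 2 by (simp add: q_def pp_def max_def power2_eq_square algebra_simps)
  next
    case 3 then show ?thesis by (simp add: q_big)
  qed (auto simp: q_def pp_def max_def power2_eq_square algebra_simps)
qed

definition chi0 :: "real \<Rightarrow> real" where "chi0 s = 1 - 2 * pp s + 4 * pp (s - 1/2) - 2 * pp (s - 1)"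
definition chi0d :: "real \<Rightarrow> real" where "chi0d s = - 4 * max 0 s + 8 * max 0 (s - 1/2) - 4 * max 0 (s - 1)"

lemma chi0_deriv: "(chi0 has_real_derivative chi0d x) (at x)"
proof -
  have "((\<lambda>s. 1 - 2 * pp (s - 0) + 4 * pp (s - 1/2) - 2 * pp (s - 1)) has_real_derivative
     0 - 2 * (2 * max 0 (x - 0)) + 4 * (2 * max 0 (x - 1/2)) - 2 * (2 * max 0 (x - 1))) (at x)"
    by (intro DERIV_diff DERIV_add DERIV_cmult pp_deriv_sh DERIV_const)
  then show ?thesis by (simp add: chi0_def[abs_def] chi0d_def)
qed

lemma chi0d_cont: "continuous_on S chi0d" unfolding chi0d_def by (auto intro!: continuous_intros)

lemma chi0_cases:
  "s \<le> 0 \<Longrightarrow> chi0 s = 1 \<and> chi0d s = 0"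
  "0 \<le> s \<Longrightarrow> s \<le> 1/2 \<Longrightarrow> chi0 s = 1 - 2 * s\<^sup>2 \<and> chi0d s = - 4 * s"
  "1/2 \<le> s \<Longrightarrow> s \<le> 1 \<Longrightarrow> chi0 s = 2 * (1 - s)\<^sup>2 \<and> chi0d s = 4 * s - 4"
  "1 \<le> s \<Longrightarrow> chi0 s = 0 \<and> chi0d s = 0"
  by (auto simp: chi0_def chi0d_def pp_def max_def power2_eq_square algebra_simps)

lemma chi0d_np: "chi0d s \<le> 0"
proof -
  consider "s \<le> 0" | "0 \<le> s" "s \<le> 1/2" | "1/2 \<le> s" "s \<le> 1" | "1 \<le> s" by linarith
  then show ?thesis by cases (use chi0_cases in auto)
qed

lemma chi0_bounds: "0 \<le> chi0 s" "chi0 s \<le> 1"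
proof -
  consider "s \<le> 0" | "0 \<le> s" "s \<le> 1/2" | "1/2 \<le> s" "s \<le> 1" | "1 \<le> s" by linarith
  then have "0 \<le> chi0 s \<and> chi0 s \<le> 1"
  proof cases
    case 2
    have "s * s \<le> (1/2) * (1/2)" using 2 by (intro mult_mono) auto
    then show ?thesis using 2 chi0_cases(2)[OF 2] by (auto simp: power2_eq_square)
  next
    case 3
    have "(1 - s) * (1 - s) \<le> (1/2) * (1/2)" using 3 by (intro mult_mono) auto
    then show ?thesis using 3 chi0_cases(3)[OF 3] by (auto simp: power2_eq_square)
  qed (use chi0_cases in auto)
  then show "0 \<le> chi0 s" "chi0 s \<le> 1" by auto
qed

lemma chi0_antimono: "a \<le> b \<Longrightarrow> chi0 b \<le> chi0 a"
  by (rule DERIV_nonpos_imp_nonincreasing[of a b chi0]) (use chi0_deriv chi0d_np in blast)+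


lemma meas_cont: "continuous_on UNIV (f :: 'a::euclidean_space \<Rightarrow> real) \<Longrightarrow> (\<lambda>x. ennreal (f x)) \<in> borel_measurable lborel"
  using borel_measurable_continuous_onI measurable_lborel2 by (metis measurable_compose measurable_ennreal)

context wave_weight
begin

lemma En_nn: "En \<tau> x \<ge> 0"
  unfolding En_def using Kpos[of x] by (auto intro!: add_nonneg_nonneg mult_nonneg_nonneg sum_nonneg)

lemma Phi_nn: "Phi \<tau> x \<ge> 0"
  unfolding Phi_def using psi_nn chi_nn by simp

lemma P_nn_integral:
  assumes "\<tau> \<ge> 0"
  shows "(\<integral>\<^sup>+x. ennreal (P \<tau> x) \<partial>lborel) = ennreal (integral (cbox (-((Ms+1) *\<^sub>R One)) ((Ms+1) *\<^sub>R One)) (P \<tau>))"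
proof -
  define bx :: "(real^2) set" where "bx = cbox (-((Ms+1) *\<^sub>R One)) ((Ms+1) *\<^sub>R One)"
  have I: "(P \<tau> has_integral integral bx (P \<tau>)) bx"
    unfolding bx_def by (rule integrable_integral[OF integrable_continuous[OF cont_P]])
  have "(\<integral>\<^sup>+x. ennreal (P \<tau> x) * indicator bx x \<partial>lborel) = ennreal (integral bx (P \<tau>))"
    by (rule nn_integral_has_integral_lebesgue'[OF _ I]) (simp add: P_def En_nn Phi_nn)
  moreover have "ennreal (P \<tau> x) * indicator bx x = ennreal (P \<tau> x)" for x
  proof (cases "x \<in> bx")
    case False
    then obtain i where i: "i \<in> Basis" "\<not> (-(Ms+1) \<le> x \<bullet> i \<and> x \<bullet> i \<le> Ms + 1)"
      unfolding bx_def mem_box by (auto simp: inner_simps)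
    then have "\<bar>x \<bullet> i\<bar> > Ms + 1" by auto
    moreover have "\<bar>x \<bullet> i\<bar> \<le> norm x" using i(1) Basis_le_norm by blast
    ultimately have "norm x \<ge> Ms" by linarith
    then show ?thesis using supp_Phi[OF assms] False by (simp add: P_def)
  qed simp
  ultimately show ?thesis by (simp add: bx_def)
qed

end


context wave
begin

definition En0 where "En0 \<tau> x = 1/2 * ((Dd eT U (\<tau>, x))\<^sup>2 + K x * (\<Sum>i\<in>UNIV. (Dd (eX i) U (\<tau>, x))\<^sup>2))"

lemma En0_nn: "En0 \<tau> x \<ge> 0"
  unfolding En0_def using Kpos[of x] by (auto intro!: add_nonneg_nonneg mult_nonneg_nonneg sum_nonneg)

lemma cont_En0: "continuous_on S (En0 \<tau>)"
proof -
  have "continuous_on S (\<lambda>x. K x)" by (rule contK)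
  have c1: "continuous_on S (\<lambda>x. Dd v U (\<tau>, x))" if "v \<in> Basis" for v
    by (rule continuous_on_compose2[OF cont1[OF that, of UNIV]]) (auto intro!: continuous_intros)
  show ?thesis unfolding En0_def
    by (auto intro!: continuous_intros c1 basis_eT basis_eX contK)
qed

lemma nn_decay:
  fixes ps psd :: "real \<Rightarrow> real" and c T0 T1 Rk :: real
  assumes psi_d: "\<And>s. (ps has_real_derivative psd s) (at s)" and psi_c: "continuous_on UNIV psd"
    and psi_nn: "\<And>s. ps s \<ge> 0" and psi'_nn: "\<And>s. psd s \<ge> 0" and c: "c > 0"
    and T: "0 \<le> T0" "T0 \<le> T1"
    and Kc1: "\<And>\<tau> x. \<tau> \<in> {T0..T1} \<Longrightarrow> psd (rho x - c * \<tau>) \<noteq> 0 \<Longrightarrow> K x \<le> c\<^sup>2"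
    and Kc2: "\<And>x. norm x \<ge> Rk \<Longrightarrow> K x \<le> c\<^sup>2"
  shows "(\<integral>\<^sup>+x. ennreal (ps (rho x - c * T1) * En0 T1 x) \<partial>lborel)
       \<le> (\<integral>\<^sup>+x. ennreal (ps (rho x - c * T0) * En0 T0 x) \<partial>lborel)"
proof -
  define N0 :: nat where "N0 = nat \<lceil>\<bar>Rk\<bar> + c * T1 + 1\<rceil>"
  define f where "f = (\<lambda>n x. ennreal (ps (rho x - c * T1) * chi0 (rho x + c * T1 - real (n + N0)) * En0 T1 x))"
  have contf: "continuous_on UNIV (\<lambda>x. ps (rho x - c * T1) * chi0 (rho x + c * T1 - real (n + N0)) * En0 T1 x)" for n
  proof -
    have cps: "continuous_on UNIV ps" using psi_d by (meson DERIV_isCont continuous_at_imp_continuous_on)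
    have cch: "continuous_on UNIV chi0" using chi0_deriv by (meson DERIV_isCont continuous_at_imp_continuous_on)
    show ?thesis
      by (intro continuous_intros continuous_on_compose2[OF cps] continuous_on_compose2[OF cch] cont_En0 cont_rho) auto
  qed
  have step: "integral\<^sup>N lborel (f n) \<le> (\<integral>\<^sup>+x. ennreal (ps (rho x - c * T0) * En0 T0 x) \<partial>lborel)" for n
  proof -
    define M where "M = real (n + N0)"
    have MN: "M \<ge> \<bar>Rk\<bar> + c * T1 + 1" unfolding M_def N0_def by linarith
    interpret W: wave_weight U K ps psd "\<lambda>s. chi0 (s - M)" "\<lambda>s. chi0d (s - M)" c "M + 1"
    proof (unfold_locales)
      show "((\<lambda>s. chi0 (s - M)) has_real_derivative chi0d (s - M)) (at s)" for s
      proof -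
        have "((\<lambda>s. s - M) has_real_derivative 1) (at s)" by (auto intro!: derivative_eq_intros)
        from DERIV_chain2[OF chi0_deriv this] show ?thesis by simp
      qed
      show "continuous_on UNIV (\<lambda>s. chi0d (s - M))"
        by (rule continuous_on_compose2[OF chi0d_cont[of UNIV]]) (auto intro!: continuous_intros)
      show "chi0 (s - M) = 0 \<and> chi0d (s - M) = 0" if "M + 1 \<le> s" for s
        using chi0_cases(4)[of "s - M"] that by simp
    qed (use dU dU1 dU2 dK cK Kpos pde psi_d psi_c psi_nn psi'_nn c chi0_bounds chi0d_np in auto)
    have PW: "W.P \<tau> x = ps (rho x - c * \<tau>) * chi0 (rho x + c * \<tau> - M) * En0 \<tau> x" for \<tau> x
      by (simp add: W.P_def W.Phi_def W.En_def W.ut_def W.g_def En0_def)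
    have Kc: "K x \<le> c\<^sup>2" if t: "\<tau> \<in> {T0..T1}" and h: "psd (rho x - c * \<tau>) \<noteq> 0 \<or> chi0d (rho x + c * \<tau> - M) \<noteq> 0" for \<tau> x
      using h
    proof
      assume "chi0d (rho x + c * \<tau> - M) \<noteq> 0"
      then have "rho x + c * \<tau> - M > 0" using chi0_cases(1)[of "rho x + c * \<tau> - M"] by (meson not_le)
      moreover have "c * \<tau> \<le> c * T1" using t c by (intro mult_left_mono) auto
      ultimately have "norm x \<ge> Rk" using rho_ge(3)[of x] MN by linarith
      then show ?thesis by (rule Kc2)
    qed (use Kc1[OF t] in auto)
    have "integral\<^sup>N lborel (f n) = (\<integral>\<^sup>+x. ennreal (W.P T1 x) \<partial>lborel)"
      unfolding PW by (simp add: f_def M_def)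
    also have "\<dots> = ennreal (integral (cbox (-((M+1+1) *\<^sub>R One)) ((M+1+1) *\<^sub>R One)) (W.P T1))"
      by (rule W.P_nn_integral) (use T in auto)
    also have "\<dots> \<le> ennreal (integral (cbox (-((M+1+1) *\<^sub>R One)) ((M+1+1) *\<^sub>R One)) (W.P T0))"
      by (rule ennreal_leI, rule W.box_decay[OF T]) (use Kc in auto)
    also have "\<dots> = (\<integral>\<^sup>+x. ennreal (W.P T0 x) \<partial>lborel)"
      by (rule W.P_nn_integral[symmetric]) (use T in auto)
    also have "\<dots> \<le> (\<integral>\<^sup>+x. ennreal (ps (rho x - c * T0) * En0 T0 x) \<partial>lborel)"
    proof (rule nn_integral_mono, rule ennreal_leI)
      fix x
      have "ps (rho x - c * T0) * En0 T0 x \<ge> 0" using psi_nn En0_nn by simp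
      then have "ps (rho x - c * T0) * En0 T0 x * chi0 (rho x + c * T0 - M) \<le> ps (rho x - c * T0) * En0 T0 x * 1"
        using chi0_bounds by (intro mult_left_mono) auto
      then show "W.P T0 x \<le> ps (rho x - c * T0) * En0 T0 x" by (simp add: PW algebra_simps)
    qed
    finally show ?thesis .
  qed
  have inc: "incseq f"
  proof (rule incseq_SucI, rule le_funI)
    fix n x
    have a: "ps (rho x - c * T1) * En0 T1 x \<ge> 0" using psi_nn En0_nn by simp
    have "chi0 (rho x + c * T1 - real (n + N0)) \<le> chi0 (rho x + c * T1 - real (Suc n + N0))"
      by (rule chi0_antimono) simp
    then have "ps (rho x - c * T1) * En0 T1 x * chi0 (rho x + c * T1 - real (n + N0))
      \<le> ps (rho x - c * T1) * En0 T1 x * chi0 (rho x + c * T1 - real (Suc n + N0))"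
      by (rule mult_left_mono[OF _ a])
    then show "f n x \<le> f (Suc n) x" unfolding f_def by (intro ennreal_leI) (simp add: algebra_simps)
  qed
  have sup: "(SUP n. f n x) = ennreal (ps (rho x - c * T1) * En0 T1 x)" for x
  proof (rule antisym)
    have a: "ps (rho x - c * T1) * En0 T1 x \<ge> 0" using psi_nn En0_nn by simp
    show "(SUP n. f n x) \<le> ennreal (ps (rho x - c * T1) * En0 T1 x)"
    proof (rule SUP_least)
      fix n
      have "ps (rho x - c * T1) * En0 T1 x * chi0 (rho x + c * T1 - real (n + N0)) \<le> ps (rho x - c * T1) * En0 T1 x * 1"
        using chi0_bounds by (intro mult_left_mono[OF _ a]) auto
      then show "f n x \<le> ennreal (ps (rho x - c * T1) * En0 T1 x)" unfolding f_def
        by (intro ennreal_leI) (simp add: algebra_simps)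
    qed
    obtain n :: nat where n: "real n \<ge> rho x + c * T1" using real_arch_simple by blast
    have "chi0 (rho x + c * T1 - real (n + N0)) = 1" using chi0_cases(1) n by simp
    then have "f n x = ennreal (ps (rho x - c * T1) * En0 T1 x)" unfolding f_def by simp
    then show "ennreal (ps (rho x - c * T1) * En0 T1 x) \<le> (SUP n. f n x)"
      by (metis UNIV_I SUP_upper)
  qed
  have "(\<integral>\<^sup>+x. ennreal (ps (rho x - c * T1) * En0 T1 x) \<partial>lborel) = (\<integral>\<^sup>+x. (SUP n. f n x) \<partial>lborel)"
    by (simp add: sup)
  also have "\<dots> = (SUP n. integral\<^sup>N lborel (f n))"
    by (rule nn_integral_monotone_convergence_SUP[OF inc]) (simp only: f_def, rule meas_cont[OF contf])
  also have "\<dots> \<le> (\<integral>\<^sup>+x. ennreal (ps (rho x - c * T0) * En0 T0 x) \<partial>lborel)"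
    by (rule SUP_least) (rule step)
  finally show ?thesis .
qed

end


lemma dt_eq:
  fixes u :: "real \<Rightarrow> real^2 \<Rightarrow> real"
  assumes dU: "\<And>p. (\<lambda>p. u (fst p) (snd p)) differentiable at p"
  shows "dt u t x = Dd eT (\<lambda>p. u (fst p) (snd p)) (t, x)"
proof -
  have "((\<lambda>s. (\<lambda>p. u (fst p) (snd p)) (s, x)) has_real_derivative Dd eT (\<lambda>p. u (fst p) (snd p)) (t, x)) (at t)"
    by (rule deriv_t[OF dU])
  then show ?thesis unfolding dt_def by (simp add: DERIV_imp_deriv)
qed

lemma dtdt_eq:
  fixes u :: "real \<Rightarrow> real^2 \<Rightarrow> real"
  assumes dU: "\<And>p. (\<lambda>p. u (fst p) (snd p)) differentiable at p"
    and dU1: "\<And>p. Dd eT (\<lambda>p. u (fst p) (snd p)) differentiable at p"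
  shows "dt (dt u) t x = Dd eT (Dd eT (\<lambda>p. u (fst p) (snd p))) (t, x)"
proof -
  have "((\<lambda>s. Dd eT (\<lambda>p. u (fst p) (snd p)) (s, x)) has_real_derivative Dd eT (Dd eT (\<lambda>p. u (fst p) (snd p))) (t, x)) (at t)"
    by (rule deriv_t[OF dU1])
  moreover have e: "dt u = (\<lambda>t x. Dd eT (\<lambda>p. u (fst p) (snd p)) (t, x))"
    by (intro ext dt_eq[OF dU])
  ultimately show ?thesis unfolding e unfolding dt_def by (simp add: DERIV_imp_deriv)
qed

lemma grad_eq:
  fixes u :: "real \<Rightarrow> real^2 \<Rightarrow> real"
  assumes dU: "\<And>p. (\<lambda>p. u (fst p) (snd p)) differentiable at p"
  shows "grad (u t) x = (\<chi> i. Dd (eX i) (\<lambda>p. u (fst p) (snd p)) (t, x))"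
proof -
  have "((\<lambda>y. (\<lambda>p. u (fst p) (snd p)) (t, y)) has_derivative (\<lambda>h. Dd (0,h) (\<lambda>p. u (fst p) (snd p)) (t, x))) (at x)"
    by (rule deriv_x[OF dU])
  from frechet_derivative_at[OF this]
  have "frechet_derivative (u t) (at x) = (\<lambda>h. Dd (0,h) (\<lambda>p. u (fst p) (snd p)) (t, x))"
    by simp
  then show ?thesis unfolding grad_def by simp
qed

lemma div_eq:
  fixes u :: "real \<Rightarrow> real^2 \<Rightarrow> real" and K :: "real^2 \<Rightarrow> real"
  assumes dU: "\<And>p. (\<lambda>p. u (fst p) (snd p)) differentiable at p"
    and dU1: "\<And>p i. Dd (eX i) (\<lambda>p. u (fst p) (snd p)) differentiable at p"
    and dK: "\<And>x. K differentiable at x"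
  shows "divergence (\<lambda>y. K y *\<^sub>R grad (u t) y) x = (\<Sum>i\<in>UNIV. Dd (axis i 1) K x * Dd (eX i) (\<lambda>p. u (fst p) (snd p)) (t, x)
      + K x * Dd (eX i) (Dd (eX i) (\<lambda>p. u (fst p) (snd p))) (t, x))"
proof -
  define U where "U = (\<lambda>p. u (fst p) (snd p))"
  have comp: "(\<lambda>y. (K y *\<^sub>R grad (u t) y) $ i) = (\<lambda>y. K y * Dd (eX i) U (t, y))" for i
    by (rule ext) (simp add: grad_eq[OF dU] U_def)
  have fd: "frechet_derivative (\<lambda>y. K y * Dd (eX i) U (t, y)) (at x) (axis i 1)
      = Dd (axis i 1) K x * Dd (eX i) U (t, x) + K x * Dd (eX i) (Dd (eX i) U) (t, x)" for i
  proof -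
    have "((\<lambda>y. K y * Dd (eX i) U (t, y)) has_derivative
      (\<lambda>h. K x * Dd (0,h) (Dd (eX i) U) (t, x) + Dd h K x * Dd (eX i) U (t, x))) (at x)"
      by (rule has_derivative_mult[OF Dd_has[OF dK] deriv_x[OF dU1[unfolded U_def[symmetric]]]])
    from frechet_derivative_at[OF this, symmetric] show ?thesis by simp
  qed
  note this = fd
  then show ?thesis unfolding divergence_def comp by (simp add: U_def)
qed

lemma cont_eq_at0:
  fixes f g :: "real \<Rightarrow> real"
  assumes "continuous_on UNIV f" "continuous_on UNIV g" "\<And>t. t > 0 \<Longrightarrow> f t = g t"
  shows "f 0 = g 0"
proof -
  have "(f \<longlongrightarrow> f 0) (at_right 0)" "(g \<longlongrightarrow> g 0) (at_right 0)"
    using assms(1,2) by (auto simp: continuous_on_def intro: tendsto_within_subset)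
  moreover have "\<forall>\<^sub>F t in at_right 0. f t = g t"
    using eventually_at_right_less[of "0::real"] by eventually_elim (use assms(3) in auto)
  ultimately have "(g \<longlongrightarrow> f 0) (at_right 0)" using Lim_transform_eventually by blast
  with \<open>(g \<longlongrightarrow> g 0) (at_right 0)\<close> show ?thesis
    using tendsto_unique[OF trivial_limit_at_right_real] by blast
qed


lemma amgm_e:
  fixes a G Kx e :: real
  assumes Kx: "Kx > 0" and G: "G \<ge> 0" and e: "e = 1/2 * (a\<^sup>2 + Kx * G\<^sup>2)"
  shows "\<bar>a\<bar> * G \<le> e / sqrt Kx"
proof -
  have Kq: "sqrt Kx * sqrt Kx = Kx" using Kx by simp
  have sK: "sqrt Kx > 0" using Kx by simp
  have "0 \<le> (\<bar>a\<bar> - sqrt Kx * G)\<^sup>2" by simp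
  also have "\<dots> = a\<^sup>2 + Kx * G\<^sup>2 - 2 * (sqrt Kx * (\<bar>a\<bar> * G))"
    using Kq by (simp add: power2_eq_square algebra_simps)
  finally have h: "2 * (sqrt Kx * (\<bar>a\<bar> * G)) \<le> a\<^sup>2 + Kx * G\<^sup>2" by linarith
  have "sqrt Kx * (\<bar>a\<bar> * G) \<le> e" unfolding e using h by simp
  then show ?thesis using sK by (simp add: le_divide_eq mult.commute)
qed

lemma pw_real:
  fixes a S G nx Kx km k0 R t e r0 :: real
  assumes km: "km > 0" and Kx: "Kx \<ge> km" and e: "e = 1/2 * (a\<^sup>2 + Kx * G\<^sup>2)" and G: "G \<ge> 0"
    and S: "\<bar>S\<bar> \<le> nx * G" and nx: "nx \<ge> 0" and Kout: "nx > r0 \<Longrightarrow> Kx = k0"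
    and R: "R > r0" and t: "t \<ge> 0" and k0: "k0 \<ge> km"
  shows "\<bar>a * S\<bar> \<le> (if nx \<le> R then R / sqrt km * e else 0) + (if R \<le> nx then t * e else 0)
          + 1 / sqrt k0 * (max 0 (nx - sqrt k0 * t) * e)"
proof -
  have Kx0: "Kx > 0" using km Kx by linarith
  have e0: "e \<ge> 0" unfolding e using Kx0 by (auto intro!: add_nonneg_nonneg mult_nonneg_nonneg)
  have am: "\<bar>a\<bar> * G \<le> e / sqrt Kx" by (rule amgm_e[OF Kx0 G e])
  have aS: "\<bar>a * S\<bar> \<le> nx * (\<bar>a\<bar> * G)"
  proof -
    have "\<bar>a * S\<bar> = \<bar>a\<bar> * \<bar>S\<bar>" by (simp add: abs_mult)
    also have "\<dots> \<le> \<bar>a\<bar> * (nx * G)" by (rule mult_left_mono[OF S]) simp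
    finally show ?thesis by (simp add: algebra_simps)
  qed
  have k0p: "sqrt k0 > 0" using km k0 by simp
  have rest: "0 \<le> 1 / sqrt k0 * (max 0 (nx - sqrt k0 * t) * e)" using e0 k0p by simp
  show ?thesis
  proof (cases "nx \<le> R")
    case True
    have "\<bar>a * S\<bar> \<le> R * (\<bar>a\<bar> * G)"
      using aS True by (meson G abs_ge_zero mult_nonneg_nonneg mult_right_mono order_trans)
    also have "\<dots> \<le> R * (e / sqrt Kx)" using am R nx True by (intro mult_left_mono) auto
    also have "\<dots> \<le> R * (e / sqrt km)"
    proof (intro mult_left_mono divide_left_mono)
      show "sqrt km \<le> sqrt Kx" using Kx by simp
    qed (use e0 km R nx True Kx0 in auto)
    finally have "\<bar>a * S\<bar> \<le> R / sqrt km * e" by simp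
    moreover have "0 \<le> (if R \<le> nx then t * e else 0)" using t e0 by simp
    ultimately show ?thesis using True rest by simp
  next
    case False
    then have K0: "Kx = k0" using Kout R by auto
    have "\<bar>a * S\<bar> \<le> nx * (e / sqrt k0)" using aS am K0 nx by (metis mult_left_mono order_trans)
    also have "\<dots> = (sqrt k0 * t + (nx - sqrt k0 * t)) * (e / sqrt k0)" by simp
    also have "\<dots> \<le> (sqrt k0 * t + max 0 (nx - sqrt k0 * t)) * (e / sqrt k0)"
      using e0 k0p by (intro mult_right_mono) auto
    also have "\<dots> = t * e + 1 / sqrt k0 * (max 0 (nx - sqrt k0 * t) * e)"
      using k0p by (simp add: field_simps)
    finally show ?thesis using False by simp
  qed
qed

context wave
begin

lemma final_comb:
  fixes R t km k0 r0 C c :: real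
  assumes km: "km > 0" and Klow: "\<And>x. K x \<ge> km" and Kout: "\<And>x. norm x > r0 \<Longrightarrow> K x = k0"
    and R: "R > r0" and r0: "r0 > 0" and t: "t > 0" and k0: "k0 \<ge> km" and c: "c = sqrt k0"
    and Wc: "(\<integral>\<^sup>+x. ennreal (max 0 (norm x - c * t) * En0 t x) \<partial>lborel)
             \<le> (\<integral>\<^sup>+x. ennreal (C * ((1 + norm x) * En0 0 x)) \<partial>lborel)"
    and C: "C \<ge> 0"
  shows "(\<integral>\<^sup>+x. ennreal \<bar>Dd eT U (t, x) * (x \<bullet> (\<chi> i. Dd (eX i) U (t, x)))\<bar> \<partial>lborel)
     \<le> ennreal (R / sqrt km) * (\<integral>\<^sup>+x\<in>cball 0 R. ennreal (En0 t x) \<partial>lborel)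
       + ennreal (C / sqrt km) * (\<integral>\<^sup>+x. ennreal ((1 + norm x) * En0 0 x) \<partial>lborel)
       + ennreal t * (\<integral>\<^sup>+x\<in>{x. norm x \<ge> R}. ennreal (En0 t x) \<partial>lborel)"
proof -
  have kmp: "sqrt km > 0" using km by simp
  have cp: "c > 0" using km k0 c by simp
  have ckm: "sqrt km \<le> c" using k0 c by simp
  have Rp: "R > 0" using R r0 by linarith
  define f1 where "f1 = (\<lambda>x. ennreal (En0 t x) * indicator (cball 0 R) x)"
  define f2 where "f2 = (\<lambda>x. ennreal (En0 t x) * indicator {x. norm x \<ge> R} x)"
  define f3 where "f3 = (\<lambda>x. ennreal (max 0 (norm x - c * t) * En0 t x))"
  have mE: "(\<lambda>x. ennreal (En0 s x)) \<in> borel_measurable lborel" for s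
    by (rule meas_cont[OF cont_En0])
  have f1m: "f1 \<in> borel_measurable lborel" unfolding f1_def
    by (intro borel_measurable_times_ennreal mE borel_measurable_indicator) (simp add: sets_lborel)
  have f2m: "f2 \<in> borel_measurable lborel" unfolding f2_def
  proof (intro borel_measurable_times_ennreal mE borel_measurable_indicator)
    have "closed {x::real^2. R \<le> norm x}" by (intro closed_Collect_le continuous_intros)
    then show "{x::real^2. R \<le> norm x} \<in> sets lborel" by (simp add: sets_lborel)
  qed
  have f3m: "f3 \<in> borel_measurable lborel" unfolding f3_def
    by (rule meas_cont) (auto intro!: continuous_intros cont_En0)
  have pw: "ennreal \<bar>Dd eT U (t, x) * (x \<bullet> (\<chi> i. Dd (eX i) U (t, x)))\<bar>
      \<le> ennreal (R / sqrt km) * f1 x + ennreal t * f2 x + ennreal (1 / c) * f3 x" for x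
  proof -
    define gv :: "real^2" where "gv = (\<chi> i. Dd (eX i) U (t, x))"
    have e: "En0 t x = 1/2 * ((Dd eT U (t, x))\<^sup>2 + K x * (norm gv)\<^sup>2)"
      by (simp add: En0_def gv_def norm_sq_vec2)
    have e0: "En0 t x \<ge> 0" by (rule En0_nn)
    have r: "\<bar>Dd eT U (t, x) * (x \<bullet> gv)\<bar> \<le> (if norm x \<le> R then R / sqrt km * En0 t x else 0)
          + (if R \<le> norm x then t * En0 t x else 0) + 1 / sqrt k0 * (max 0 (norm x - sqrt k0 * t) * En0 t x)"
      by (rule pw_real[OF km Klow e norm_ge_zero Cauchy_Schwarz_ineq2 norm_ge_zero Kout R _ k0]) (use t in auto)
    have n1: "0 \<le> (if norm x \<le> R then R / sqrt km * En0 t x else 0)" using Rp kmp e0 by simp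
    have n2: "0 \<le> (if R \<le> norm x then t * En0 t x else 0)" using t e0 by simp
    have n3: "0 \<le> 1 / sqrt k0 * (max 0 (norm x - sqrt k0 * t) * En0 t x)" using e0 k0 km by (intro mult_nonneg_nonneg) auto
    have "ennreal \<bar>Dd eT U (t, x) * (x \<bullet> gv)\<bar> \<le> ennreal ((if norm x \<le> R then R / sqrt km * En0 t x else 0)
          + (if R \<le> norm x then t * En0 t x else 0) + 1 / sqrt k0 * (max 0 (norm x - sqrt k0 * t) * En0 t x))"
      by (rule ennreal_leI[OF r])
    also have "\<dots> = ennreal (if norm x \<le> R then R / sqrt km * En0 t x else 0)
          + ennreal (if R \<le> norm x then t * En0 t x else 0) + ennreal (1 / sqrt k0 * (max 0 (norm x - sqrt k0 * t) * En0 t x))"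
      using n1 n2 n3 by (simp add: ennreal_plus)
    also have "\<dots> = ennreal (R / sqrt km) * f1 x + ennreal t * f2 x + ennreal (1 / c) * f3 x"
    proof -
      have a1: "R / sqrt km \<ge> 0" using Rp kmp by simp
      have q1: "ennreal (if norm x \<le> R then R / sqrt km * En0 t x else 0) = ennreal (R / sqrt km) * f1 x"
      proof (cases "norm x \<le> R")
        case True
        then have "f1 x = ennreal (En0 t x)" by (simp add: f1_def indicator_def dist_norm)
        then show ?thesis using True ennreal_mult[OF a1 e0] by simp
      qed (simp add: f1_def indicator_def dist_norm)
      have q2: "ennreal (if R \<le> norm x then t * En0 t x else 0) = ennreal t * f2 x"
      proof (cases "R \<le> norm x")
        case True
        then have "f2 x = ennreal (En0 t x)" by (simp add: f2_def indicator_def)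
        then show ?thesis using True ennreal_mult[OF _ e0, of t] t by simp
      qed (simp add: f2_def indicator_def)
      have q3: "ennreal (1 / sqrt k0 * (max 0 (norm x - sqrt k0 * t) * En0 t x)) = ennreal (1 / c) * f3 x"
        unfolding f3_def c by (rule ennreal_mult) (use e0 k0 km in auto)
      show ?thesis using q1 q2 q3 by simp
    qed
    finally show ?thesis by (simp add: gv_def)
  qed
  have "(\<integral>\<^sup>+x. ennreal \<bar>Dd eT U (t, x) * (x \<bullet> (\<chi> i. Dd (eX i) U (t, x)))\<bar> \<partial>lborel)
      \<le> (\<integral>\<^sup>+x. ennreal (R / sqrt km) * f1 x + ennreal t * f2 x + ennreal (1 / c) * f3 x \<partial>lborel)"
    by (rule nn_integral_mono) (rule pw)
  also have "\<dots> = ennreal (R / sqrt km) * integral\<^sup>N lborel f1 + ennreal t * integral\<^sup>N lborel f2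
      + ennreal (1 / c) * integral\<^sup>N lborel f3"
    using f1m f2m f3m by (simp add: nn_integral_add nn_integral_cmult)
  also have "ennreal (1 / c) * integral\<^sup>N lborel f3 \<le> ennreal (C / sqrt km) * (\<integral>\<^sup>+x. ennreal ((1 + norm x) * En0 0 x) \<partial>lborel)"
  proof -
    have m0: "(\<lambda>x. ennreal ((1 + norm x) * En0 0 x)) \<in> borel_measurable lborel"
      by (rule meas_cont) (auto intro!: continuous_intros cont_En0)
    have "(\<integral>\<^sup>+x. ennreal (C * ((1 + norm x) * En0 0 x)) \<partial>lborel) = ennreal C * (\<integral>\<^sup>+x. ennreal ((1 + norm x) * En0 0 x) \<partial>lborel)"
    proof -
      have "(\<lambda>x. ennreal (C * ((1 + norm x) * En0 0 x))) = (\<lambda>x. ennreal C * ennreal ((1 + norm x) * En0 0 x))"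
        using C En0_nn by (auto simp: ennreal_mult)
      then show ?thesis using m0 by (simp add: nn_integral_cmult)
    qed
    then have "integral\<^sup>N lborel f3 \<le> ennreal C * (\<integral>\<^sup>+x. ennreal ((1 + norm x) * En0 0 x) \<partial>lborel)"
      using Wc by (simp add: f3_def)
    then have "ennreal (1 / c) * integral\<^sup>N lborel f3 \<le> ennreal (1 / c) * (ennreal C * (\<integral>\<^sup>+x. ennreal ((1 + norm x) * En0 0 x) \<partial>lborel))"
      by (rule mult_left_mono) simp
    also have "\<dots> = ennreal (C / c) * (\<integral>\<^sup>+x. ennreal ((1 + norm x) * En0 0 x) \<partial>lborel)"
    proof -
      have "ennreal (1 / c) * ennreal C = ennreal (C / c)" using ennreal_mult[of "1/c" C] cp C by simp
      then show ?thesis by (simp add: mult.assoc[symmetric])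
    qed
    also have "\<dots> \<le> ennreal (C / sqrt km) * (\<integral>\<^sup>+x. ennreal ((1 + norm x) * En0 0 x) \<partial>lborel)"
    proof (rule mult_right_mono, rule ennreal_leI)
      show "C / c \<le> C / sqrt km" using C kmp ckm cp by (intro divide_left_mono) auto
    qed simp
    finally show ?thesis .
  qed
  finally show ?thesis
    by (simp add: f1_def f2_def ac_simps add_left_mono)
qed

end


theorem lemma3p2:
  fixes K :: "real^2 \<Rightarrow> real" and km r0 k0 :: real
  assumes K_BC1: "BC1 K"
    and km_pos: "km > 0" and K_lower: "\<forall>x. K x \<ge> km"
    and K_rad: "\<forall>x. x \<bullet> grad K x \<le> 0"
    and r0_pos: "r0 > 0" and k0_ge: "k0 \<ge> km"
    and K_out: "\<forall>x. norm x > r0 \<longrightarrow> K x = k0"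
  shows "\<exists>C>0. \<forall>(u0 :: real^2 \<Rightarrow> real) (u1 :: real^2 \<Rightarrow> real) (u :: real \<Rightarrow> real^2 \<Rightarrow> real) R t.
      C0_inf u0 \<longrightarrow> C0_inf u1 \<longrightarrow>
      smooth (\<lambda>p :: real \<times> (real^2). u (fst p) (snd p)) \<longrightarrow>
      (\<forall>t>0. \<forall>x. dt (dt u) t x = divergence (\<lambda>y. K y *\<^sub>R grad (u t) y) x) \<longrightarrow>
      u 0 = u0 \<longrightarrow> (\<forall>x. dt u 0 x = u1 x) \<longrightarrow>
      R > r0 \<longrightarrow> t > R / sqrt k0 \<longrightarrow>
      (\<integral>\<^sup>+ x. ennreal \<bar>dt u t x * (x \<bullet> grad (u t) x)\<bar> \<partial>lborel)
        \<le> ennreal (R / sqrt km) * (\<integral>\<^sup>+ x\<in>cball 0 R. ennreal (edens K u t x) \<partial>lborel)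
          + ennreal (C / sqrt km) * (\<integral>\<^sup>+ x. ennreal ((1 + norm x) * edens K u 0 x) \<partial>lborel)
          + ennreal t * (\<integral>\<^sup>+ x\<in>{x. norm x \<ge> R}. ennreal (edens K u t x) \<partial>lborel)"
proof -
  have bK: "bounded (range K)" and dK: "\<And>x. K differentiable at x"
    and cK: "\<And>i. continuous_on UNIV (\<lambda>x. frechet_derivative K (at x) (axis i 1))"
    using K_BC1 unfolding BC1_def by auto
  obtain Bk where Bk: "\<And>x. K x \<le> Bk"
    using bK unfolding bounded_iff by (metis abs_le_D1 rangeI real_norm_def)
  define c where "c = sqrt k0"
  define cb where "cb = sqrt (max Bk k0)"
  define \<tau>0 where "\<tau>0 = (r0 + 2) / c"
  define b where "b = cb * \<tau>0"
  have k0p: "k0 > 0" using km_pos k0_ge by linarith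
  have kmp: "sqrt km > 0" using km_pos by simp
  have c_pos: "c > 0" using k0p by (simp add: c_def)
  have c_km: "sqrt km \<le> c" using k0_ge by (simp add: c_def)
  have cb_pos: "cb > 0" using k0p by (simp add: cb_def)
  have Kcb: "K x \<le> cb\<^sup>2" for x using Bk[of x] k0p by (simp add: cb_def)
  have Kk0: "K x = c\<^sup>2" if "norm x > r0" for x using K_out that k0p by (simp add: c_def)
  have t0_pos: "\<tau>0 > 0" using r0_pos c_pos by (simp add: \<tau>0_def)
  have ct0: "c * \<tau>0 = r0 + 2" using c_pos by (simp add: \<tau>0_def)
  have b_nn: "b \<ge> 0" using cb_pos t0_pos by (simp add: b_def)
  show ?thesis
  proof (rule exI[of _ "b + 2"], intro conjI allI impI)
    show "b + 2 > 0" using b_nn by simp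
    fix u0 u1 :: "real^2 \<Rightarrow> real" and u :: "real \<Rightarrow> real^2 \<Rightarrow> real" and R t :: real
    assume "C0_inf u0" "C0_inf u1"
      and sm: "smooth (\<lambda>p :: real \<times> (real^2). u (fst p) (snd p))"
      and pde: "\<forall>t>0. \<forall>x. dt (dt u) t x = divergence (\<lambda>y. K y *\<^sub>R grad (u t) y) x"
      and "u 0 = u0" "\<forall>x. dt u 0 x = u1 x"
      and R: "R > r0" and tR: "t > R / sqrt k0"
    define U where "U = (\<lambda>p::real \<times> (real^2). u (fst p) (snd p))"
    have ip: "\<And>vs x. set vs \<subseteq> Basis \<Longrightarrow> iter_pderiv U vs differentiable at x"
      using sm unfolding smooth_def U_def by blast
    have dU: "\<And>p. U differentiable at p" using ip[of "[]"] by simp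
    have e1: "iter_pderiv U [v] = Dd v U" for v :: "real \<times> (real^2)" by (rule ext) (simp add: Dd_def)
    have dU1: "\<And>v p. v \<in> Basis \<Longrightarrow> Dd v U differentiable at p" using ip e1
      by (metis empty_set empty_subsetI insert_subset list.simps(15))
    have e2: "iter_pderiv U [w, v] = Dd w (Dd v U)" for v w :: "real \<times> (real^2)" by (rule ext) (simp add: Dd_def[abs_def])
    have dU2: "\<And>v w p. v \<in> Basis \<Longrightarrow> w \<in> Basis \<Longrightarrow> Dd w (Dd v U) differentiable at p"
    proof -
      fix v w :: "real \<times> (real^2)" and p assume "v \<in> Basis" "w \<in> Basis"
      then have "set [w, v] \<subseteq> Basis" by simp
      from ip[OF this] have "iter_pderiv U [w, v] differentiable at p" . then show "Dd w (Dd v U) differentiable at p" by (simp only: e2)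
    qed
    have cK': "\<And>i. continuous_on UNIV (Dd (axis i 1) K)"
      using cK by (simp add: Dd_def[abs_def])
    have Kpos: "\<And>x. K x > 0" using K_lower km_pos by (metis less_le_trans)
    have cU1: "continuous_on UNIV (Dd v U)" if "v \<in> Basis" for v
      by (meson dU1[OF that] differentiable_at_withinI differentiable_imp_continuous_on differentiable_on_def)
    have cU2: "continuous_on UNIV (Dd w (Dd v U))" if "v \<in> Basis" "w \<in> Basis" for v w
      by (meson dU2[OF that] differentiable_at_withinI differentiable_imp_continuous_on differentiable_on_def)
    have sl: "continuous_on UNIV (\<lambda>s. F (s, x))" if "continuous_on UNIV F" for F :: "real \<times> (real^2) \<Rightarrow> real" and x
      by (rule continuous_on_compose2[OF that]) (auto intro!: continuous_intros)
    have pde_pos: "Dd eT (Dd eT U) (\<tau>, x) =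
        (\<Sum>i\<in>UNIV. Dd (axis i 1) K x * Dd (eX i) U (\<tau>, x) + K x * Dd (eX i) (Dd (eX i) U) (\<tau>, x))"
      if "\<tau> > 0" for \<tau> x
    proof -
      have "dt (dt u) \<tau> x = divergence (\<lambda>y. K y *\<^sub>R grad (u \<tau>) y) x" using pde that by blast
      then show ?thesis
        using dtdt_eq[OF dU[unfolded U_def] dU1[OF basis_eT, unfolded U_def]]
          div_eq[OF dU[unfolded U_def] dU1[OF basis_eX, unfolded U_def] dK]
        by (simp add: U_def)
    qed
    have pde0: "Dd eT (Dd eT U) (\<tau>, x) =
        (\<Sum>i\<in>UNIV. Dd (axis i 1) K x * Dd (eX i) U (\<tau>, x) + K x * Dd (eX i) (Dd (eX i) U) (\<tau>, x))"
      if "\<tau> \<ge> 0" for \<tau> x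
    proof (cases "\<tau> = 0")
      case False with that pde_pos show ?thesis by simp
    next
      case True
      have cKx: "continuous_on UNIV (\<lambda>s::real. K x)" by simp
      have "(\<lambda>s. Dd eT (Dd eT U) (s, x)) 0 =
        (\<lambda>s. \<Sum>i\<in>UNIV. Dd (axis i 1) K x * Dd (eX i) U (s, x) + K x * Dd (eX i) (Dd (eX i) U) (s, x)) 0"
        by (rule cont_eq_at0)
           (auto intro!: sl cU1 cU2 continuous_intros basis_eT basis_eX pde_pos)
      then show ?thesis using True by simp
    qed
    interpret W: wave U K
      by unfold_locales (use dU dU1 dU2 dK cK' Kpos pde0 in auto)
    show "(\<integral>\<^sup>+ x. ennreal \<bar>dt u t x * (x \<bullet> grad (u t) x)\<bar> \<partial>lborel)
        \<le> ennreal (R / sqrt km) * (\<integral>\<^sup>+ x\<in>cball 0 R. ennreal (edens K u t x) \<partial>lborel)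
          + ennreal ((b + 2) / sqrt km) * (\<integral>\<^sup>+ x. ennreal ((1 + norm x) * edens K u 0 x) \<partial>lborel)
          + ennreal t * (\<integral>\<^sup>+ x\<in>{x. norm x \<ge> R}. ennreal (edens K u t x) \<partial>lborel)"
    proof -
      have tpos: "t > 0"
      proof -
        have "R / sqrt k0 > 0" using R r0_pos k0p by simp
        then show ?thesis using tR by linarith
      qed
      have ed: "edens K u s x = W.En0 s x" for s x
        unfolding W.En0_def edens_def
        by (simp add: dt_eq[OF dU[unfolded U_def]] grad_eq[OF dU[unfolded U_def]] norm_sq_vec2 U_def)
      have integrand: "dt u t x * (x \<bullet> grad (u t) x) = Dd eT U (t,x) * (x \<bullet> (\<chi> i. Dd (eX i) U (t,x)))" for x
        by (simp add: dt_eq[OF dU[unfolded U_def]] grad_eq[OF dU[unfolded U_def]] U_def)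
      have En0_alt: "W.En0 s x = 1/2 * ((Dd eT U (s,x))\<^sup>2 + K x * (norm (\<chi> i. Dd (eX i) U (s,x)))\<^sup>2)" for s x
        by (simp add: W.En0_def norm_sq_vec2)
      have W2: "(\<integral>\<^sup>+x. ennreal (norm x * W.En0 T x) \<partial>lborel) \<le> (\<integral>\<^sup>+x. ennreal ((b+2) * ((1 + norm x) * W.En0 0 x)) \<partial>lborel)"
        if T: "0 \<le> T" "T \<le> \<tau>0" for T
      proof -
        have dq: "((\<lambda>s. q (s + (b+1))) has_real_derivative qd (s + (b+1))) (at s)" for s
        proof -
          have "((\<lambda>s. s + (b+1)) has_real_derivative 1) (at s)" by (auto intro!: derivative_eq_intros)
          from DERIV_chain2[OF q_deriv this] show ?thesis by simp
        qed
        have cq: "continuous_on UNIV (\<lambda>s. qd (s + (b+1)))"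
          by (rule continuous_on_compose2[OF qd_cont[of UNIV]]) (auto intro!: continuous_intros)
        have nd: "(\<integral>\<^sup>+x. ennreal (q (rho x - cb * T + (b+1)) * W.En0 T x) \<partial>lborel)
            \<le> (\<integral>\<^sup>+x. ennreal (q (rho x - cb * 0 + (b+1)) * W.En0 0 x) \<partial>lborel)"
          using W.nn_decay[of "\<lambda>s. q (s + (b+1))" "\<lambda>s. qd (s + (b+1))" cb 0 T 0] dq cq q_nn qd_nn cb_pos Kcb T
          by simp
        have lo: "(\<integral>\<^sup>+x. ennreal (norm x * W.En0 T x) \<partial>lborel) \<le> (\<integral>\<^sup>+x. ennreal (q (rho x - cb * T + (b+1)) * W.En0 T x) \<partial>lborel)"
        proof (rule nn_integral_mono, rule ennreal_leI, rule mult_right_mono[OF _ W.En0_nn])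
          fix x
          have "cb * T \<le> b" unfolding b_def using cb_pos T by (intro mult_left_mono) auto
          then show "norm x \<le> q (rho x - cb * T + (b+1))"
            using q_lower[of "rho x - cb * T + (b+1)"] rho_ge(2)[of x] by linarith
        qed
        have up: "(\<integral>\<^sup>+x. ennreal (q (rho x - cb * 0 + (b+1)) * W.En0 0 x) \<partial>lborel) \<le> (\<integral>\<^sup>+x. ennreal ((b+2) * ((1 + norm x) * W.En0 0 x)) \<partial>lborel)"
        proof (rule nn_integral_mono, rule ennreal_leI)
          fix x
          have "q (rho x - cb*0 + (b+1)) \<le> max 0 (rho x - cb*0 + (b+1))" by (rule q_upper)
          also have "\<dots> \<le> norm x + b + 2" using rho_ge(3)[of x] rho_ge(1)[of x] b_nn by simp
          also have "\<dots> \<le> (b+2) * (1 + norm x)"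
          proof -
            have "0 \<le> (b + 1) * norm x" using b_nn by simp
            then show ?thesis by (simp add: algebra_simps)
          qed
          finally have "q (rho x - cb*0 + (b+1)) \<le> (b+2) * (1 + norm x)" .
          then have "q (rho x - cb*0 + (b+1)) * W.En0 0 x \<le> (b+2) * (1 + norm x) * W.En0 0 x"
            by (rule mult_right_mono[OF _ W.En0_nn])
          then show "q (rho x - cb*0 + (b+1)) * W.En0 0 x \<le> (b+2) * ((1 + norm x) * W.En0 0 x)"
            by (simp add: mult.assoc)
        qed
        show ?thesis using lo nd up by (meson order_trans)
      qed
      have W1: "(\<integral>\<^sup>+x. ennreal (max 0 (norm x - c * t) * W.En0 t x) \<partial>lborel) \<le> (\<integral>\<^sup>+x. ennreal (norm x * W.En0 \<tau>0 x) \<partial>lborel)"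
        if T: "\<tau>0 \<le> t"
      proof -
        have dq: "((\<lambda>s. q (s + 1)) has_real_derivative qd (s + 1)) (at s)" for s
        proof -
          have "((\<lambda>s. s + 1) has_real_derivative 1) (at s)" by (auto intro!: derivative_eq_intros)
          from DERIV_chain2[OF q_deriv this] show ?thesis by simp
        qed
        have cq: "continuous_on UNIV (\<lambda>s. qd (s + 1))"
          by (rule continuous_on_compose2[OF qd_cont[of UNIV]]) (auto intro!: continuous_intros)
        have Kc1: "K x \<le> c\<^sup>2" if \<tau>: "\<tau> \<in> {\<tau>0..t}" and h: "qd (rho x - c * \<tau> + 1) \<noteq> 0" for \<tau> x
        proof -
          have "rho x - c * \<tau> + 1 > 0" using h qd_zero[of "rho x - c * \<tau> + 1"] by (meson not_le)
          moreover have "c * \<tau>0 \<le> c * \<tau>" using \<tau> c_pos by (intro mult_left_mono) auto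
          ultimately have "norm x > r0" using ct0 rho_ge(3)[of x] by linarith
          then show ?thesis using Kk0 by simp
        qed
        have nd: "(\<integral>\<^sup>+x. ennreal (q (rho x - c * t + 1) * W.En0 t x) \<partial>lborel)
            \<le> (\<integral>\<^sup>+x. ennreal (q (rho x - c * \<tau>0 + 1) * W.En0 \<tau>0 x) \<partial>lborel)"
        proof -
          have Kc2: "K x \<le> c\<^sup>2" if "r0 + 1 \<le> norm x" for x using Kk0[of x] that by simp
          show ?thesis
            using W.nn_decay[of "\<lambda>s. q (s + 1)" "\<lambda>s. qd (s + 1)" c \<tau>0 t "r0 + 1"] dq cq q_nn qd_nn c_pos Kc1 Kc2 T t0_pos
            by simp
        qed
        have lo: "(\<integral>\<^sup>+x. ennreal (max 0 (norm x - c * t) * W.En0 t x) \<partial>lborel) \<le> (\<integral>\<^sup>+x. ennreal (q (rho x - c * t + 1) * W.En0 t x) \<partial>lborel)"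
        proof (rule nn_integral_mono, rule ennreal_leI, rule mult_right_mono[OF _ W.En0_nn])
          fix x
          show "max 0 (norm x - c * t) \<le> q (rho x - c * t + 1)"
            using q_lower[of "rho x - c * t + 1"] q_nn[of "rho x - c * t + 1"] rho_ge(2)[of x] by linarith
        qed
        have up: "(\<integral>\<^sup>+x. ennreal (q (rho x - c * \<tau>0 + 1) * W.En0 \<tau>0 x) \<partial>lborel) \<le> (\<integral>\<^sup>+x. ennreal (norm x * W.En0 \<tau>0 x) \<partial>lborel)"
        proof (rule nn_integral_mono, rule ennreal_leI, rule mult_right_mono[OF _ W.En0_nn])
          fix x
          have "q (rho x - c * \<tau>0 + 1) \<le> max 0 (rho x - c * \<tau>0 + 1)" by (rule q_upper)
          moreover have "max 0 (rho x - c * \<tau>0 + 1) \<le> norm x"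
            using ct0 rho_ge(3)[of x] r0_pos norm_ge_zero[of x] by (simp add: max_def)
          ultimately show "q (rho x - c * \<tau>0 + 1) \<le> norm x" by linarith
        qed
        show ?thesis using lo nd up by (meson order_trans)
      qed
      have Wc: "(\<integral>\<^sup>+x. ennreal (max 0 (norm x - c * t) * W.En0 t x) \<partial>lborel) \<le> (\<integral>\<^sup>+x. ennreal ((b+2) * ((1 + norm x) * W.En0 0 x)) \<partial>lborel)"
      proof (cases "t \<le> \<tau>0")
        case True
        have "(\<integral>\<^sup>+x. ennreal (max 0 (norm x - c * t) * W.En0 t x) \<partial>lborel) \<le> (\<integral>\<^sup>+x. ennreal (norm x * W.En0 t x) \<partial>lborel)"
        proof (rule nn_integral_mono, rule ennreal_leI, rule mult_right_mono[OF _ W.En0_nn])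
          fix x show "max 0 (norm x - c * t) \<le> norm x" using c_pos tpos by simp
        qed
        also have "\<dots> \<le> (\<integral>\<^sup>+x. ennreal ((b+2) * ((1 + norm x) * W.En0 0 x)) \<partial>lborel)"
          by (rule W2) (use tpos True in auto)
        finally show ?thesis .
      next
        case False
        then have "\<tau>0 \<le> t" by simp
        from order_trans[OF W1[OF this] W2[of \<tau>0]] show ?thesis using t0_pos by simp
      qed
      have fc: "(\<integral>\<^sup>+x. ennreal \<bar>Dd eT U (t, x) * (x \<bullet> (\<chi> i. Dd (eX i) U (t, x)))\<bar> \<partial>lborel)
         \<le> ennreal (R / sqrt km) * (\<integral>\<^sup>+x\<in>cball 0 R. ennreal (W.En0 t x) \<partial>lborel)
           + ennreal ((b + 2) / sqrt km) * (\<integral>\<^sup>+x. ennreal ((1 + norm x) * W.En0 0 x) \<partial>lborel)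
           + ennreal t * (\<integral>\<^sup>+x\<in>{x. norm x \<ge> R}. ennreal (W.En0 t x) \<partial>lborel)"
        using W.final_comb[OF km_pos K_lower[rule_format] K_out[rule_format] R r0_pos tpos k0_ge c_def Wc] b_nn
        by simp
      show ?thesis unfolding integrand ed by (rule fc)
    qed
  qed
qed


end
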